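(* Let $\mathbf{k}$ be a field of characteristic zero, let $(C^\bullet,\partial)$ and $(\tilde C^\bullet,\tilde\partial)$ be complexes of finite-dimensional $\mathbf{k}$-vector spaces of the same odd length $d=2r-1$, and let $\Gamma$, $\tilde\Gamma$ be chirality operators on $C^\bullet$ and $\tilde C^\bullet$. Then $\hat\Gamma:=\Gamma\oplus\tilde\Gamma$ is a chirality operator on the direct sum complex $(C^\bullet\oplus\tilde C^\bullet,\partial\oplus\tilde\partial)$ and \[ \rho_{\hat\Gamma}=\mu_{H^\bullet(\partial),H^\bullet(\tilde\partial)}(\rho_\Gamma\otimes\rho_{\tilde\Gamma}), \] where $\operatorname{Det}(H^\bullet(\partial\oplus\tilde\partial))$ is identified with $\operatorname{Det}(H^\bullet(\partial)\oplus H^\bullet(\tilde\partial))$.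
   Context: Determinant lines: $\operatorname{Det}(V)=\Lambda^{\dim V}V$, $\operatorname{Det}(0)=\mathbf{k}$, $L^{-1}=\operatorname{Hom}(L,\mathbf{k})$, $l^{-1}(l)=1$, $\operatorname{Det}(V^\bullet)=\bigotimes_j\operatorname{Det}(V^j)^{(-1)^j}$. Fusion $\mu_{V,W}:\operatorname{Det}(V)\otimes\operatorname{Det}(W)\to\operatorname{Det}(V\oplus W)$ concatenates wedges; $\mu^{-1}_{V,W}$ is the transpose of its inverse on dual lines; for graded spaces of length $d$, $\mu_{V^\bullet,W^\bullet}=(-1)^{\sum_{0\le k<j\le d}\dim V^j\dim W^k}\bigotimes_q\mu_{V^q,W^q}^{(-1)^q}$. The isomorphism $\phi_{C^\bullet}:\operatorname{Det}(C^\bullet)\to\operatorname{Det}(H^\bullet(\partial))$: choose $C^j=B^j\oplus H^j\oplus A^j$ with $B^j\oplus H^j=\operatorname{Ker}\partial\cap C^j$, $B^j=\partial(A^{j-1})=\partial(C^{j-1})$, $A^{-1}=A^d=0$; for nonzero $c_j\in\operatorname{Det}(C^j)$, $a_j\in\operatorname{Det}(A^j)$ ($a_{-1}=1$), $h_j\in\operatorname{Det}(H^j)\cong\operatorname{Det}(H^j(\partial))$ is unique with $c_j=\mu_{B^j,H^j,A^j}(\partial(a_{j-1})\otimes h_j\otimes a_j)$; $\phi_{C^\bullet}(c_0\otimes c_1^{-1}\otimes\cdots\otimes c_d^{(-1)^d})=(-1)^{\mathcal N}h_0\otimes\cdots\otimes h_d^{(-1)^d}$, $\mathcal N=\frac12\sum_j\dim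 A^j(\dim A^j+(-1)^{j+1})$. A chirality operator is an involution $\Gamma$ with $\Gamma(C^j)=C^{d-j}$. For nonzero $c_j\in\operatorname{Det}(C^j)$ ($0\le j\le r-1$), $c_\Gamma=(-1)^{\mathcal R(C^\bullet)}c_0\otimes c_1^{-1}\otimes\cdots\otimes c_{r-1}^{(-1)^{r-1}}\otimes(\Gamma c_{r-1})^{(-1)^r}\otimes\cdots\otimes(\Gamma c_0)^{-1}$ (the entry in degree $k$ has exponent $(-1)^k$), with $\mathcal R(C^\bullet)=\frac12\sum_{j=0}^{r-1}\dim C^j(\dim C^j+(-1)^{r+j})$; it is independent of the $c_j$. The refined torsion is $\rho_\Gamma=\phi_{C^\bullet}(c_\Gamma)$. *)

theory Defs
  imports "Jordan_Normal_Form.Determinant"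
begin

text \<open>
A cochain complex of finite-dimensional k-vector spaces of length d is
C^j = k^(n j) (0 <= j <= d), with differentials given by matrices D j : k^(n j) -> k^(n (j+1))
for j < d (D j = 0 for j >= d by convention, C^(d+1) = 0).
\<close>

definition is_complex :: "(nat \<Rightarrow> nat) \<Rightarrow> (nat \<Rightarrow> 'a::field mat) \<Rightarrow> nat \<Rightarrow> bool" where
  "is_complex n D d \<longleftrightarrow>
     (\<forall>j<d. D j \<in> carrier_mat (n (Suc j)) (n j)) \<and>
     (\<forall>j. Suc j < d \<longrightarrow> D (Suc j) * D j = 0\<^sub>m (n (Suc (Suc j))) (n j))"

definition is_chirality :: "(nat \<Rightarrow> nat) \<Rightarrow> (nat \<Rightarrow> 'a::field mat) \<Rightarrow> nat \<Rightarrow> bool" where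
  "is_chirality n Gam d \<longleftrightarrow>
     (\<forall>j\<le>d. Gam j \<in> carrier_mat (n (d - j)) (n j) \<and> Gam (d - j) * Gam j = 1\<^sub>m (n j))"

definition cocyc :: "(nat \<Rightarrow> nat) \<Rightarrow> (nat \<Rightarrow> 'a::field mat) \<Rightarrow> nat \<Rightarrow> nat \<Rightarrow> 'a vec set" where
  "cocyc n D d j = {x \<in> carrier_vec (n j). j \<ge> d \<or> D j *\<^sub>v x = 0\<^sub>v (n (Suc j))}"

definition cobound :: "(nat \<Rightarrow> nat) \<Rightarrow> (nat \<Rightarrow> 'a::field mat) \<Rightarrow> nat \<Rightarrow> 'a vec set" where
  "cobound n D j = (if j = 0 then {0\<^sub>v (n 0)}
                    else {D (j - 1) *\<^sub>v y | y. y \<in> carrier_vec (n (j - 1))})"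

text \<open>
Elements of the determinant line Det(H^\<bullet>(\<partial>)) are represented by pairs (s, eta), where
eta j is a list of cocycles whose classes form an ordered basis of H^j(\<partial>) = Z^j/B^j;
the pair stands for  s * [eta 0] \<otimes> [eta 1]^(-1) \<otimes> ... \<otimes> [eta d]^((-1)^d),
[eta j] being the wedge product of the classes.
\<close>

definition cohom_basis :: "(nat \<Rightarrow> nat) \<Rightarrow> (nat \<Rightarrow> 'a::field mat) \<Rightarrow> nat \<Rightarrow> nat \<Rightarrow> 'a vec list \<Rightarrow> bool" where
  "cohom_basis n D d j e \<longleftrightarrow>
     set e \<subseteq> cocyc n D d j \<and>
     (\<forall>c \<in> carrier_vec (length e). mat_of_cols (n j) e *\<^sub>v c \<in> cobound n D j \<longrightarrow> c = 0\<^sub>v (length e)) \<and>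
     (\<forall>x \<in> cocyc n D d j. \<exists>c \<in> carrier_vec (length e). x - mat_of_cols (n j) e *\<^sub>v c \<in> cobound n D j)"

definition detH_rep :: "(nat \<Rightarrow> nat) \<Rightarrow> (nat \<Rightarrow> 'a::field mat) \<Rightarrow> nat \<Rightarrow> 'a \<times> (nat \<Rightarrow> 'a vec list) \<Rightarrow> bool" where
  "detH_rep n D d p \<longleftrightarrow> (\<forall>j\<le>d. cohom_basis n D d j (snd p j))"

definition alt_pow :: "nat \<Rightarrow> 'a::field \<Rightarrow> 'a" where
  "alt_pow j x = (if even j then x else inverse x)"

text \<open>Equality of the represented elements of Det(H^\<bullet>(\<partial>)):
 if eta' j = M j eta j modulo B^j, then [eta' j] = det (M j) [eta j].\<close>

definition detH_eq :: "(nat \<Rightarrow> nat) \<Rightarrow> (nat \<Rightarrow> 'a::field mat) \<Rightarrow> nat \<Rightarrow>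
     'a \<times> (nat \<Rightarrow> 'a vec list) \<Rightarrow> 'a \<times> (nat \<Rightarrow> 'a vec list) \<Rightarrow> bool" where
  "detH_eq n D d p q \<longleftrightarrow> detH_rep n D d p \<and> detH_rep n D d q \<and>
     (\<exists>M. (\<forall>j\<le>d. M j \<in> carrier_mat (length (snd p j)) (length (snd p j)) \<and>
              length (snd q j) = length (snd p j) \<and>
              (\<forall>i < length (snd p j).
                  snd q j ! i - mat_of_cols (n j) (snd p j) *\<^sub>v row (M j) i \<in> cobound n D j)) \<and>
          fst p = fst q * (\<Prod>j\<le>d. alt_pow j (det (M j))))"

text \<open>The data for \<phi>: a j is an ordered basis of A^j, eta j one of H^j, such that
  \<partial>(a (j-1)), eta j, a j together form an ordered basis of C^j, eta j \<subseteq> Ker, A^d = 0.\<close>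

definition dprev :: "(nat \<Rightarrow> 'a::field mat) \<Rightarrow> (nat \<Rightarrow> 'a vec list) \<Rightarrow> nat \<Rightarrow> 'a vec list" where
  "dprev D a j = (if j = 0 then [] else map (\<lambda>v. D (j - 1) *\<^sub>v v) (a (j - 1)))"

definition phi_mat :: "(nat \<Rightarrow> nat) \<Rightarrow> (nat \<Rightarrow> 'a::field mat) \<Rightarrow> (nat \<Rightarrow> 'a vec list) \<Rightarrow> (nat \<Rightarrow> 'a vec list) \<Rightarrow> nat \<Rightarrow> 'a mat" where
  "phi_mat n D a eta j = mat_of_cols (n j) (dprev D a j @ eta j @ a j)"

definition phi_datum :: "(nat \<Rightarrow> nat) \<Rightarrow> (nat \<Rightarrow> 'a::field mat) \<Rightarrow> nat \<Rightarrow> (nat \<Rightarrow> 'a vec list) \<times> (nat \<Rightarrow> 'a vec list) \<Rightarrow> bool" where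
  "phi_datum n D d ae \<longleftrightarrow>
     (\<forall>j\<le>d. set (fst ae j) \<subseteq> carrier_vec (n j) \<and> set (snd ae j) \<subseteq> cocyc n D d j \<and>
            length (dprev D (fst ae) j) + length (snd ae j) + length (fst ae j) = n j \<and>
            det (phi_mat n D (fst ae) (snd ae) j) \<noteq> 0) \<and>
     fst ae d = []"

text \<open>Refined torsion for d = 2r-1.  We take c_j = e_1 \<and> ... \<and> e_(n j) (standard basis) for j < r;
 then c_(d-j) := Gam c_j for the entries of degree >= r, i.e. c_k is the wedge of the columns
 of Gam (d-k).  With h_j = t_j [eta j], c_j = \<mu>(\<partial>a_(j-1) \<otimes> h_j \<otimes> a_j) gives
 t_j = det(c_j-columns) / det(phi_mat j).\<close>

definition c_mat :: "(nat \<Rightarrow> nat) \<Rightarrow> (nat \<Rightarrow> 'a::field mat) \<Rightarrow> nat \<Rightarrow> nat \<Rightarrow> 'a mat" where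
  "c_mat n Gam r k = (if k < r then 1\<^sub>m (n k) else Gam (2 * r - 1 - k))"

definition N_exp :: "(nat \<Rightarrow> 'a vec list) \<Rightarrow> nat \<Rightarrow> nat" where
  "N_exp a d = (\<Sum>j\<le>d. let m = length (a j) in if even j then m * (m - 1) else m * (m + 1)) div 2"

definition R_exp :: "(nat \<Rightarrow> nat) \<Rightarrow> nat \<Rightarrow> nat" where
  "R_exp n r = (\<Sum>j<r. if even (r + j) then n j * (n j + 1) else n j * (n j - 1)) div 2"

definition rho_rep :: "(nat \<Rightarrow> nat) \<Rightarrow> (nat \<Rightarrow> 'a::field mat) \<Rightarrow> (nat \<Rightarrow> 'a mat) \<Rightarrow> nat \<Rightarrow>
     (nat \<Rightarrow> 'a vec list) \<times> (nat \<Rightarrow> 'a vec list) \<Rightarrow> 'a \<times> (nat \<Rightarrow> 'a vec list)" where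
  "rho_rep n D Gam r ae =
     (let d = 2 * r - 1 in
      ((-1) ^ (R_exp n r + N_exp (fst ae) d) *
         (\<Prod>j\<le>d. alt_pow j (det (c_mat n Gam r j) / det (phi_mat n D (fst ae) (snd ae) j))),
       snd ae))"

definition rho :: "(nat \<Rightarrow> nat) \<Rightarrow> (nat \<Rightarrow> 'a::field mat) \<Rightarrow> (nat \<Rightarrow> 'a mat) \<Rightarrow> nat \<Rightarrow> 'a \<times> (nat \<Rightarrow> 'a vec list)" where
  "rho n D Gam r = rho_rep n D Gam r (SOME ae. phi_datum n D (2 * r - 1) ae)"

definition dsum_dim :: "(nat \<Rightarrow> nat) \<Rightarrow> (nat \<Rightarrow> nat) \<Rightarrow> nat \<Rightarrow> nat" where
  "dsum_dim n m j = n j + m j"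

definition dsum_diff :: "(nat \<Rightarrow> nat) \<Rightarrow> (nat \<Rightarrow> nat) \<Rightarrow> (nat \<Rightarrow> 'a::field mat) \<Rightarrow> (nat \<Rightarrow> 'a mat) \<Rightarrow> nat \<Rightarrow> 'a mat" where
  "dsum_diff n m D E j = four_block_mat (D j) (0\<^sub>m (n (Suc j)) (m j)) (0\<^sub>m (m (Suc j)) (n j)) (E j)"

definition dsum_chir :: "(nat \<Rightarrow> nat) \<Rightarrow> (nat \<Rightarrow> nat) \<Rightarrow> nat \<Rightarrow> (nat \<Rightarrow> 'a::field mat) \<Rightarrow> (nat \<Rightarrow> 'a mat) \<Rightarrow> nat \<Rightarrow> 'a mat" where
  "dsum_chir n m d G H j = four_block_mat (G j) (0\<^sub>m (n (d - j)) (m j)) (0\<^sub>m (m (d - j)) (n j)) (H j)"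

text \<open>Graded fusion \<mu>_(H(\<partial>),H(\<partial>~)) into Det(H^\<bullet>(\<partial>\<oplus>\<partial>~)), using the canonical identification
 H^j(\<partial>) \<oplus> H^j(\<partial>~) = H^j(\<partial>\<oplus>\<partial>~) (classes of x \<oplus> 0 and 0 \<oplus> y).\<close>

definition mu_H :: "(nat \<Rightarrow> nat) \<Rightarrow> (nat \<Rightarrow> nat) \<Rightarrow> nat \<Rightarrow>
     'a::field \<times> (nat \<Rightarrow> 'a vec list) \<Rightarrow> 'a \<times> (nat \<Rightarrow> 'a vec list) \<Rightarrow> 'a \<times> (nat \<Rightarrow> 'a vec list)" where
  "mu_H n m d p q =
     ((-1) ^ (\<Sum>j\<le>d. \<Sum>k<j. length (snd p j) * length (snd q k)) * fst p * fst q,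
      \<lambda>j. map (\<lambda>v. v @\<^sub>v 0\<^sub>v (m j)) (snd p j) @ map (\<lambda>w. 0\<^sub>v (n j) @\<^sub>v w) (snd q j))"

end

theory Submission
  imports Defs
begin

lemma sum_lessThan_add_split:
  "(\<Sum>j<a+b. f j) = (\<Sum>j<a. f j) + (\<Sum>j<b. f (a+j))" for f :: "nat \<Rightarrow> 'b::comm_monoid_add"
  by (induction b) (auto simp: add.assoc)

lemma mc_index:
  assumes "c \<in> carrier_vec (length L)" "i < n"
  shows "(mat_of_cols n L *\<^sub>v c) $ i = (\<Sum>j<length L. L ! j $ i * c $ j)"
  using assms by (auto simp: mat_of_cols_def scalar_prod_def row_def intro!: sum.cong)

lemma mc_carrier[simp]: "mat_of_cols n L *\<^sub>v c \<in> carrier_vec n"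
  by (simp add: carrier_vecI)

lemma mc_dim[simp]: "dim_vec (mat_of_cols n L *\<^sub>v c) = n"
  by simp

lemma mc_append:
  assumes "c1 \<in> carrier_vec (length L1)" "c2 \<in> carrier_vec (length L2)"
  shows "mat_of_cols n (L1 @ L2) *\<^sub>v (c1 @\<^sub>v c2) = mat_of_cols n L1 *\<^sub>v c1 + mat_of_cols n L2 *\<^sub>v c2"
proof (rule eq_vecI)
  fix i assume "i < dim_vec (mat_of_cols n L1 *\<^sub>v c1 + mat_of_cols n L2 *\<^sub>v c2)"
  hence i: "i < n" by simp
  have c: "c1 @\<^sub>v c2 \<in> carrier_vec (length (L1 @ L2))" using assms by auto
  have "(mat_of_cols n (L1 @ L2) *\<^sub>v (c1 @\<^sub>v c2)) $ i
     = (\<Sum>j<length L1 + length L2. (L1 @ L2) ! j $ i * (c1 @\<^sub>v c2) $ j)"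
    using mc_index[OF c i] by simp
  also have "\<dots> = (\<Sum>j<length L1. (L1 @ L2) ! j $ i * (c1 @\<^sub>v c2) $ j)
      + (\<Sum>j<length L2. (L1 @ L2) ! (length L1 + j) $ i * (c1 @\<^sub>v c2) $ (length L1 + j))"
    by (rule sum_lessThan_add_split)
  also have "(\<Sum>j<length L1. (L1 @ L2) ! j $ i * (c1 @\<^sub>v c2) $ j) = (\<Sum>j<length L1. L1 ! j $ i * c1 $ j)"
    using assms by (intro sum.cong refl) (auto simp: nth_append)
  also have "(\<Sum>j<length L2. (L1 @ L2) ! (length L1 + j) $ i * (c1 @\<^sub>v c2) $ (length L1 + j))
     = (\<Sum>j<length L2. L2 ! j $ i * c2 $ j)"
    using assms by (intro sum.cong refl) (auto simp: nth_append)
  finally show "(mat_of_cols n (L1 @ L2) *\<^sub>v (c1 @\<^sub>v c2)) $ i = (mat_of_cols n L1 *\<^sub>v c1 + mat_of_cols n L2 *\<^sub>v c2) $ i"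
    using assms i by (simp add: mc_index[OF assms(1) i] mc_index[OF assms(2) i])
qed simp

lemma mc_zero[simp]: "mat_of_cols n L *\<^sub>v 0\<^sub>v (length L) = 0\<^sub>v n"
  by (rule eq_vecI) (auto simp: mc_index)

lemma mc_add: assumes "c1 \<in> carrier_vec (length L)" "c2 \<in> carrier_vec (length L)"
  shows "mat_of_cols n L *\<^sub>v (c1 + c2) = mat_of_cols n L *\<^sub>v c1 + mat_of_cols n L *\<^sub>v c2"
  by (rule mult_add_distrib_mat_vec[OF mat_of_cols_carrier(1) assms])

lemma mc_smult: fixes L :: "'a::field vec list" assumes "c \<in> carrier_vec (length L)"
  shows "mat_of_cols n L *\<^sub>v (a \<cdot>\<^sub>v c) = a \<cdot>\<^sub>v (mat_of_cols n L *\<^sub>v c)"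
  by (rule mult_mat_vec[OF mat_of_cols_carrier(1) assms])

lemma wide_kernel:
  fixes A :: "'a::field mat"
  assumes A: "A \<in> carrier_mat k l" and kl: "k < l"
  shows "\<exists>v \<in> carrier_vec l. v \<noteq> 0\<^sub>v l \<and> A *\<^sub>v v = 0\<^sub>v k"
proof -
  define A' where "A' = mat l l (\<lambda>(i,j). if i < k then A $$ (i,j) else 0)"
  have A'c: "A' \<in> carrier_mat l l" unfolding A'_def by simp
  have eq: "A' = mat\<^sub>r l l (\<lambda>i. if i = l - 1 then 0\<^sub>v l else vec l (\<lambda>j. A' $$ (i,j)))"
    by (rule eq_matI) (use kl in \<open>auto simp: A'_def mat_of_rows_def\<close>)
  have "det A' = 0"
    by (subst eq, rule det_row_0) (use kl in auto)
  then obtain v where v: "v \<in> carrier_vec l" "v \<noteq> 0\<^sub>v l" "A' *\<^sub>v v = 0\<^sub>v l"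
    using det_0_iff_vec_prod_zero_field[OF A'c] by auto
  have "A *\<^sub>v v = 0\<^sub>v k"
  proof (rule eq_vecI)
    fix i assume "i < dim_vec (0\<^sub>v k :: 'a vec)"
    hence i: "i < k" by simp
    have "(A' *\<^sub>v v) $ i = 0" using v(3) i kl by simp
    moreover have "(A' *\<^sub>v v) $ i = (A *\<^sub>v v) $ i"
      using A i kl v(1) by (auto simp: A'_def scalar_prod_def row_def intro!: sum.cong)
    ultimately show "(A *\<^sub>v v) $ i = 0\<^sub>v k $ i" using i by simp
  qed (use A in simp)
  thus ?thesis using v by blast
qed

definition indep :: "nat \<Rightarrow> 'a::field vec list \<Rightarrow> bool" where
  "indep n L \<longleftrightarrow> (\<forall>c \<in> carrier_vec (length L). mat_of_cols n L *\<^sub>v c = 0\<^sub>v n \<longrightarrow> c = 0\<^sub>v (length L))"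

definition inspan :: "nat \<Rightarrow> 'a::field vec list \<Rightarrow> 'a vec \<Rightarrow> bool" where
  "inspan n L x \<longleftrightarrow> (\<exists>c \<in> carrier_vec (length L). x = mat_of_cols n L *\<^sub>v c)"

lemma indep_length:
  assumes "indep n (L :: 'a::field vec list)"
  shows "length L \<le> n"
proof (rule ccontr)
  assume "\<not> length L \<le> n"
  then obtain v where "v \<in> carrier_vec (length L)" "v \<noteq> 0\<^sub>v (length L)" "mat_of_cols n L *\<^sub>v v = 0\<^sub>v n"
    using wide_kernel[OF mat_of_cols_carrier(1), of n L] by auto
  thus False using assms unfolding indep_def by blast
qed

lemma indep_unique:
  assumes "indep n L" "c1 \<in> carrier_vec (length L)" "c2 \<in> carrier_vec (length L)"
    "mat_of_cols n L *\<^sub>v c1 = mat_of_cols n L *\<^sub>v c2"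
  shows "c1 = c2"
proof -
  have "mat_of_cols n L *\<^sub>v (c1 - c2) = mat_of_cols n L *\<^sub>v c1 - mat_of_cols n L *\<^sub>v c2"
    by (rule mult_minus_distrib_mat_vec[OF mat_of_cols_carrier(1) assms(2,3)])
  also have "\<dots> = 0\<^sub>v n" using assms(4) by simp
  finally have "c1 - c2 = 0\<^sub>v (length L)" using assms(1-3) unfolding indep_def by auto
  show ?thesis
  proof (rule eq_vecI)
    fix i assume "i < dim_vec c2"
    hence "(c1 - c2) $ i = 0" using \<open>c1 - c2 = _\<close> assms(2,3) by simp
    thus "c1 $ i = c2 $ i" using \<open>i < dim_vec c2\<close> assms(2,3) by simp
  qed (use assms(2,3) in simp)
qed


lemma mc_map_mult:
  fixes M :: "'a::field mat"
  assumes M: "M \<in> carrier_mat n k" and C: "set C \<subseteq> carrier_vec k"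
  shows "mat_of_cols n (map (\<lambda>c. M *\<^sub>v c) C) = M * mat_of_cols k C"
proof (rule eq_matI)
  fix i j assume i: "i < dim_row (M * mat_of_cols k C)" and j: "j < dim_col (M * mat_of_cols k C)"
  hence i': "i < n" and j': "j < length C" using M by auto
  have "col (mat_of_cols k C) j = C ! j"
    using C j' by (intro col_mat_of_cols) auto
  thus "mat_of_cols n (map (\<lambda>c. M *\<^sub>v c) C) $$ (i, j) = (M * mat_of_cols k C) $$ (i, j)"
    using i' j' M by (simp add: mat_of_cols_index)
qed (use M in auto)

lemma mc_col: fixes L :: "'a::field vec list"
  assumes "set L \<subseteq> carrier_vec n" "j < length L"
  shows "mat_of_cols n L *\<^sub>v unit_vec (length L) j = L ! j"
proof (rule eq_vecI)
  fix i assume "i < dim_vec (L ! j)"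
  moreover have "L ! j \<in> carrier_vec n" using assms by auto
  ultimately have i: "i < n" by simp
  have "(mat_of_cols n L *\<^sub>v unit_vec (length L) j) $ i = (\<Sum>k<length L. L ! k $ i * unit_vec (length L) j $ k)"
    by (rule mc_index) (auto simp: i)
  also have "\<dots> = (\<Sum>k<length L. if k = j then L ! j $ i else 0)"
    by (intro sum.cong refl) (auto simp: unit_vec_def)
  also have "\<dots> = L ! j $ i" using assms(2) by simp
  finally show "(mat_of_cols n L *\<^sub>v unit_vec (length L) j) $ i = L ! j $ i" .
next
  have "L ! j \<in> carrier_vec n" using assms by auto
  thus "dim_vec (mat_of_cols n L *\<^sub>v unit_vec (length L) j) = dim_vec (L ! j)" by simp
qed

lemma inspan_elem: fixes L :: "'a::field vec list" assumes "set L \<subseteq> carrier_vec n" "x \<in> set L" shows "inspan n L x"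
proof -
  obtain j where j: "j < length L" "x = L ! j" using assms(2) by (auto simp: in_set_conv_nth)
  show ?thesis unfolding inspan_def using mc_col[OF assms(1) j(1)] j
    by (intro bexI[of _ "unit_vec (length L) j"]) auto
qed

lemma inspan_carrier: "inspan n L x \<Longrightarrow> x \<in> carrier_vec n"
  unfolding inspan_def by auto

lemma inspan_zero: "inspan n L (0\<^sub>v n)"
  unfolding inspan_def by (intro bexI[of _ "0\<^sub>v (length L)"]) auto

lemma inspan_add: fixes L :: "'a::field vec list"
  assumes "inspan n L x" "inspan n L y" shows "inspan n L (x + y)"
proof -
  obtain c d where "c \<in> carrier_vec (length L)" "d \<in> carrier_vec (length L)"
    "x = mat_of_cols n L *\<^sub>v c" "y = mat_of_cols n L *\<^sub>v d" using assms unfolding inspan_def by auto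
  thus ?thesis unfolding inspan_def by (intro bexI[of _ "c + d"]) (auto simp: mc_add)
qed

lemma inspan_smult: fixes L :: "'a::field vec list"
  assumes "inspan n L x" shows "inspan n L (a \<cdot>\<^sub>v x)"
proof -
  obtain c where "c \<in> carrier_vec (length L)" "x = mat_of_cols n L *\<^sub>v c"
    using assms unfolding inspan_def by auto
  thus ?thesis unfolding inspan_def by (intro bexI[of _ "a \<cdot>\<^sub>v c"]) (auto simp: mc_smult)
qed

lemma inspan_diff: fixes L :: "'a::field vec list"
  assumes "inspan n L x" "inspan n L y" shows "inspan n L (x - y)"
proof -
  obtain c d where "c \<in> carrier_vec (length L)" "d \<in> carrier_vec (length L)"
    "x = mat_of_cols n L *\<^sub>v c" "y = mat_of_cols n L *\<^sub>v d" using assms unfolding inspan_def by auto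
  thus ?thesis unfolding inspan_def
    by (intro bexI[of _ "c - d"]) (auto simp: mult_minus_distrib_mat_vec[OF mat_of_cols_carrier(1)])
qed

lemma inspan_app_left: fixes L1 :: "'a::field vec list"
  assumes "inspan n L1 x" shows "inspan n (L1 @ L2) x"
proof -
  obtain c where c: "c \<in> carrier_vec (length L1)" "x = mat_of_cols n L1 *\<^sub>v c"
    using assms unfolding inspan_def by auto
  have z: "0\<^sub>v (length L2) \<in> carrier_vec (length L2)" by simp
  have "mat_of_cols n (L1 @ L2) *\<^sub>v (c @\<^sub>v 0\<^sub>v (length L2)) = mat_of_cols n L1 *\<^sub>v c + mat_of_cols n L2 *\<^sub>v 0\<^sub>v (length L2)"
    by (rule mc_append[OF c(1) z])
  also have "\<dots> = mat_of_cols n L1 *\<^sub>v c + 0\<^sub>v n" by (simp only: mc_zero)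
  also have "\<dots> = x" using c(2) by simp
  finally have e: "x = mat_of_cols n (L1 @ L2) *\<^sub>v (c @\<^sub>v 0\<^sub>v (length L2))" by simp
  have cc: "c @\<^sub>v 0\<^sub>v (length L2) \<in> carrier_vec (length (L1 @ L2))" using c(1) by simp
  show ?thesis unfolding inspan_def using e cc by blast
qed

lemma inspan_app_right: fixes L1 :: "'a::field vec list"
  assumes "inspan n L2 x" shows "inspan n (L1 @ L2) x"
proof -
  obtain c where c: "c \<in> carrier_vec (length L2)" "x = mat_of_cols n L2 *\<^sub>v c"
    using assms unfolding inspan_def by auto
  have z: "0\<^sub>v (length L1) \<in> carrier_vec (length L1)" by simp
  have "mat_of_cols n (L1 @ L2) *\<^sub>v (0\<^sub>v (length L1) @\<^sub>v c) = mat_of_cols n L1 *\<^sub>v 0\<^sub>v (length L1) + mat_of_cols n L2 *\<^sub>v c"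
    by (rule mc_append[OF z c(1)])
  also have "\<dots> = 0\<^sub>v n + mat_of_cols n L2 *\<^sub>v c" by (simp only: mc_zero)
  also have "\<dots> = x" using c(2) by simp
  finally have e: "x = mat_of_cols n (L1 @ L2) *\<^sub>v (0\<^sub>v (length L1) @\<^sub>v c)" by simp
  have cc: "0\<^sub>v (length L1) @\<^sub>v c \<in> carrier_vec (length (L1 @ L2))" using c(1) by simp
  show ?thesis unfolding inspan_def using e cc by blast
qed

lemma inspan_app_split: fixes L1 :: "'a::field vec list"
  assumes "inspan n (L1 @ L2) x"
  obtains y z where "inspan n L1 y" "inspan n L2 z" "x = y + z"
proof -
  obtain c where c: "c \<in> carrier_vec (length L1 + length L2)" "x = mat_of_cols n (L1 @ L2) *\<^sub>v c"
    using assms unfolding inspan_def by auto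
  have ce: "c = vec_first c (length L1) @\<^sub>v vec_last c (length L2)" using c(1) by simp
  have "x = mat_of_cols n (L1 @ L2) *\<^sub>v (vec_first c (length L1) @\<^sub>v vec_last c (length L2))"
    using c(2) ce by simp
  also have "\<dots> = mat_of_cols n L1 *\<^sub>v vec_first c (length L1) + mat_of_cols n L2 *\<^sub>v vec_last c (length L2)"
    by (rule mc_append) auto
  finally have "x = mat_of_cols n L1 *\<^sub>v vec_first c (length L1) + mat_of_cols n L2 *\<^sub>v vec_last c (length L2)" .
  moreover have "inspan n L1 (mat_of_cols n L1 *\<^sub>v vec_first c (length L1))"
    unfolding inspan_def by (intro bexI[of _ "vec_first c (length L1)"]) auto
  moreover have "inspan n L2 (mat_of_cols n L2 *\<^sub>v vec_last c (length L2))"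
    unfolding inspan_def by (intro bexI[of _ "vec_last c (length L2)"]) auto
  ultimately show ?thesis using that by blast
qed

lemma inspan_mono: fixes L1 :: "'a::field vec list"
  assumes sub: "\<forall>y \<in> set L1. inspan n L2 y" and x: "inspan n L1 x"
  shows "inspan n L2 x"
proof -
  define C where "C = map (\<lambda>y. SOME c. c \<in> carrier_vec (length L2) \<and> y = mat_of_cols n L2 *\<^sub>v c) L1"
  have Cp: "C ! i \<in> carrier_vec (length L2) \<and> L1 ! i = mat_of_cols n L2 *\<^sub>v (C ! i)" if "i < length L1" for i
  proof -
    have "\<exists>c. c \<in> carrier_vec (length L2) \<and> L1 ! i = mat_of_cols n L2 *\<^sub>v c"
      using sub that unfolding inspan_def by auto
    hence "(SOME c. c \<in> carrier_vec (length L2) \<and> L1 ! i = mat_of_cols n L2 *\<^sub>v c) \<in> carrier_vec (length L2) \<and>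
      L1 ! i = mat_of_cols n L2 *\<^sub>v (SOME c. c \<in> carrier_vec (length L2) \<and> L1 ! i = mat_of_cols n L2 *\<^sub>v c)"
      by (rule someI_ex)
    thus ?thesis unfolding C_def using that by simp
  qed
  have Cc: "set C \<subseteq> carrier_vec (length L2)" using Cp by (auto simp: in_set_conv_nth C_def)
  have L1e: "L1 = map (\<lambda>c. mat_of_cols n L2 *\<^sub>v c) C"
    using Cp by (intro nth_equalityI) (auto simp: C_def)
  have M: "mat_of_cols n L1 = mat_of_cols n L2 * mat_of_cols (length L2) C"
    by (subst L1e, rule mc_map_mult[OF _ Cc]) simp
  obtain c where c: "c \<in> carrier_vec (length L1)" "x = mat_of_cols n L1 *\<^sub>v c"
    using x unfolding inspan_def by auto
  have "x = (mat_of_cols n L2 * mat_of_cols (length L2) C) *\<^sub>v c" using c M by simp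
  also have "\<dots> = mat_of_cols n L2 *\<^sub>v (mat_of_cols (length L2) C *\<^sub>v c)"
    by (rule assoc_mult_mat_vec[OF mat_of_cols_carrier(1) mat_of_cols_carrier(1)]) (use c in \<open>simp add: C_def\<close>)
  finally have "x = mat_of_cols n L2 *\<^sub>v (mat_of_cols (length L2) C *\<^sub>v c)" .
  thus ?thesis unfolding inspan_def by (intro bexI[of _ "mat_of_cols (length L2) C *\<^sub>v c"]) auto
qed

lemma factor_length: fixes X :: "'a::field vec list"
  assumes ind: "indep n X" and sub: "\<forall>y \<in> set X. inspan n Y y"
  shows "length X \<le> length Y"
proof (rule ccontr)
  assume less: "\<not> length X \<le> length Y"
  define C where "C = map (\<lambda>y. SOME c. c \<in> carrier_vec (length Y) \<and> y = mat_of_cols n Y *\<^sub>v c) X"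
  have Cp: "C ! i \<in> carrier_vec (length Y) \<and> X ! i = mat_of_cols n Y *\<^sub>v (C ! i)" if "i < length X" for i
  proof -
    have "\<exists>c. c \<in> carrier_vec (length Y) \<and> X ! i = mat_of_cols n Y *\<^sub>v c"
      using sub that unfolding inspan_def by auto
    hence "(SOME c. c \<in> carrier_vec (length Y) \<and> X ! i = mat_of_cols n Y *\<^sub>v c) \<in> carrier_vec (length Y) \<and>
      X ! i = mat_of_cols n Y *\<^sub>v (SOME c. c \<in> carrier_vec (length Y) \<and> X ! i = mat_of_cols n Y *\<^sub>v c)"
      by (rule someI_ex)
    thus ?thesis unfolding C_def using that by simp
  qed
  have Cc: "set C \<subseteq> carrier_vec (length Y)" using Cp by (auto simp: in_set_conv_nth C_def)
  have Xe: "X = map (\<lambda>c. mat_of_cols n Y *\<^sub>v c) C"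
    using Cp by (intro nth_equalityI) (auto simp: C_def)
  have M: "mat_of_cols n X = mat_of_cols n Y * mat_of_cols (length Y) C"
    by (subst Xe, rule mc_map_mult[OF _ Cc]) simp
  have lC: "length C = length X" by (simp add: C_def)
  obtain v where v: "v \<in> carrier_vec (length X)" "v \<noteq> 0\<^sub>v (length X)"
     "mat_of_cols (length Y) C *\<^sub>v v = 0\<^sub>v (length Y)"
    using wide_kernel[OF mat_of_cols_carrier(1), of "length Y" C] less lC by auto
  have "mat_of_cols n X *\<^sub>v v = (mat_of_cols n Y * mat_of_cols (length Y) C) *\<^sub>v v" using M by simp
  also have "\<dots> = mat_of_cols n Y *\<^sub>v (mat_of_cols (length Y) C *\<^sub>v v)"
    by (rule assoc_mult_mat_vec[OF mat_of_cols_carrier(1) mat_of_cols_carrier(1)]) (use v lC in simp)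
  also have "\<dots> = 0\<^sub>v n" using v(3) by simp
  finally have "mat_of_cols n X *\<^sub>v v = 0\<^sub>v n" .
  thus False using ind v unfolding indep_def by blast
qed

lemma indep_app_left: fixes L1 :: "'a::field vec list"
  assumes "indep n (L1 @ L2)" shows "indep n L1"
  unfolding indep_def
proof (intro ballI impI)
  fix c assume c: "c \<in> carrier_vec (length L1)" "mat_of_cols n L1 *\<^sub>v c = 0\<^sub>v n"
  have "mat_of_cols n (L1 @ L2) *\<^sub>v (c @\<^sub>v 0\<^sub>v (length L2)) = 0\<^sub>v n"
    using c by (subst mc_append) auto
  moreover have "c @\<^sub>v 0\<^sub>v (length L2) \<in> carrier_vec (length (L1 @ L2))" using c by auto
  ultimately have z: "c @\<^sub>v 0\<^sub>v (length L2) = 0\<^sub>v (length (L1 @ L2))"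
    using assms unfolding indep_def by blast
  show "c = 0\<^sub>v (length L1)"
  proof (rule eq_vecI)
    fix i assume "i < dim_vec (0\<^sub>v (length L1) :: 'a vec)"
    hence i: "i < length L1" by simp
    have "(c @\<^sub>v 0\<^sub>v (length L2)) $ i = 0" using z i by simp
    thus "c $ i = 0\<^sub>v (length L1) $ i" using i c by simp
  qed (use c in simp)
qed

lemma indep_app_right: fixes L1 :: "'a::field vec list"
  assumes "indep n (L1 @ L2)" shows "indep n L2"
  unfolding indep_def
proof (intro ballI impI)
  fix c assume c: "c \<in> carrier_vec (length L2)" "mat_of_cols n L2 *\<^sub>v c = 0\<^sub>v n"
  have "mat_of_cols n (L1 @ L2) *\<^sub>v (0\<^sub>v (length L1) @\<^sub>v c) = 0\<^sub>v n"
    using c by (subst mc_append) auto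
  moreover have "0\<^sub>v (length L1) @\<^sub>v c \<in> carrier_vec (length (L1 @ L2))" using c by auto
  ultimately have z: "0\<^sub>v (length L1) @\<^sub>v c = 0\<^sub>v (length (L1 @ L2))"
    using assms unfolding indep_def by blast
  show "c = 0\<^sub>v (length L2)"
  proof (rule eq_vecI)
    fix i assume "i < dim_vec (0\<^sub>v (length L2) :: 'a vec)"
    hence i: "i < length L2" by simp
    have "(0\<^sub>v (length L1) @\<^sub>v c) $ (length L1 + i) = 0" using z i by simp
    thus "c $ i = 0\<^sub>v (length L2) $ i" using i c by simp
  qed (use c in simp)
qed


lemma det_indep: fixes L :: "'a::field vec list"
  assumes "length L = n" "det (mat_of_cols n L) \<noteq> 0" shows "indep n L"
proof -
  have A: "mat_of_cols n L \<in> carrier_mat n n" using mat_of_cols_carrier(1)[of n L] by (simp only: assms(1))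
  show ?thesis using det_0_iff_vec_prod_zero_field[OF A] assms unfolding indep_def by auto
qed

lemma indep_det: fixes L :: "'a::field vec list"
  assumes "length L = n" "indep n L" shows "det (mat_of_cols n L) \<noteq> 0"
proof -
  have A: "mat_of_cols n L \<in> carrier_mat n n" using mat_of_cols_carrier(1)[of n L] by (simp only: assms(1))
  show ?thesis using det_0_iff_vec_prod_zero_field[OF A] assms unfolding indep_def by auto
qed

lemma det_span: fixes L :: "'a::field vec list"
  assumes "length L = n" "det (mat_of_cols n L) \<noteq> 0" "x \<in> carrier_vec n" shows "inspan n L x"
proof -
  have A: "mat_of_cols n L \<in> carrier_mat n n" using mat_of_cols_carrier(1)[of n L] by (simp only: assms(1))
  from det_non_zero_imp_unit[OF A assms(2), of "()"]
  obtain B where B: "B \<in> carrier_mat n n" "mat_of_cols n L * B = 1\<^sub>m n"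
    unfolding Units_def ring_mat_def by auto
  have "x = (mat_of_cols n L * B) *\<^sub>v x" using B(2) assms(3) by simp
  also have "\<dots> = mat_of_cols n L *\<^sub>v (B *\<^sub>v x)" by (rule assoc_mult_mat_vec[OF A B(1) assms(3)])
  finally show ?thesis unfolding inspan_def using B(1) assms(1) assms(3) by (intro bexI[of _ "B *\<^sub>v x"]) auto
qed

lemma unit_vecs_indep: "indep n (unit_vecs n :: 'a::field vec list)"
proof -
  have M: "mat_of_cols n (unit_vecs n) = (1\<^sub>m n :: 'a mat)"
    by (rule eq_matI) (auto simp: mat_of_cols_def unit_vecs_def unit_vec_def)
  show ?thesis unfolding indep_def M by (auto simp: unit_vecs_def)
qed

lemma indep_span_len: fixes L :: "'a::field vec list"
  assumes "indep n L" "\<forall>x \<in> carrier_vec n. inspan n L x"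
  shows "length L = n"
proof -
  have "length (unit_vecs n :: 'a vec list) \<le> length L"
    by (rule factor_length[OF unit_vecs_indep]) (use assms(2) unit_vecs_carrier in blast)
  thus ?thesis using indep_length[OF assms(1)] by (simp add: unit_vecs_def)
qed

lemma mc_snoc_index:
  assumes "c \<in> carrier_vec (Suc (length L))" "i < n"
  shows "(mat_of_cols n (L @ [x]) *\<^sub>v c) $ i = (\<Sum>j<length L. L ! j $ i * c $ j) + x $ i * c $ length L"
proof -
  have "(mat_of_cols n (L @ [x]) *\<^sub>v c) $ i = (\<Sum>j<Suc (length L). (L @ [x]) ! j $ i * c $ j)"
    using mc_index[of c "L @ [x]" i n] assms by simp
  also have "\<dots> = (\<Sum>j<length L. (L @ [x]) ! j $ i * c $ j) + x $ i * c $ length L"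
    by simp
  also have "(\<Sum>j<length L. (L @ [x]) ! j $ i * c $ j) = (\<Sum>j<length L. L ! j $ i * c $ j)"
    by (intro sum.cong refl) (auto simp: nth_append)
  finally show ?thesis .
qed

lemma indep_snoc: fixes L :: "'a::field vec list"
  assumes ind: "indep n L" and x: "x \<in> carrier_vec n" and nx: "\<not> inspan n L x"
  shows "indep n (L @ [x])"
  unfolding indep_def
proof (intro ballI impI)
  fix c assume c: "c \<in> carrier_vec (length (L @ [x]))" and z: "mat_of_cols n (L @ [x]) *\<^sub>v c = 0\<^sub>v n"
  let ?l = "length L"
  have c': "c \<in> carrier_vec (Suc ?l)" using c by simp
  have eq: "(\<Sum>j<?l. L ! j $ i * c $ j) + x $ i * c $ ?l = 0" if "i < n" for i
    using mc_snoc_index[OF c' that, of x] z that by (metis index_zero_vec(1))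
  have t0: "c $ ?l = 0"
  proof (rule ccontr)
    assume t: "c $ ?l \<noteq> 0"
    define c1 where "c1 = vec ?l (\<lambda>j. - c $ j / c $ ?l)"
    have "mat_of_cols n L *\<^sub>v c1 = x"
    proof (rule eq_vecI)
      fix i assume "i < dim_vec x" hence i: "i < n" using x by simp
      have "(mat_of_cols n L *\<^sub>v c1) $ i = (\<Sum>j<?l. L ! j $ i * (- c $ j / c $ ?l))"
        by (subst mc_index) (auto simp: c1_def i)
      also have "\<dots> = - (\<Sum>j<?l. L ! j $ i * c $ j) / c $ ?l"
        by (simp add: sum_divide_distrib sum_negf)
      also have "(\<Sum>j<?l. L ! j $ i * c $ j) = - (x $ i * c $ ?l)"
        using eq[OF i] by (simp only: eq_neg_iff_add_eq_0)
      also have "- (- (x $ i * c $ ?l)) / c $ ?l = x $ i" using t by simp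
      finally show "(mat_of_cols n L *\<^sub>v c1) $ i = x $ i" .
    qed (use x in simp)
    moreover have "c1 \<in> carrier_vec ?l" by (simp add: c1_def)
    ultimately show False using nx unfolding inspan_def by auto
  qed
  define c1 where "c1 = vec ?l (\<lambda>j. c $ j)"
  have "mat_of_cols n L *\<^sub>v c1 = 0\<^sub>v n"
  proof (rule eq_vecI)
    fix i assume "i < dim_vec (0\<^sub>v n :: 'a vec)" hence i: "i < n" by simp
    have "(mat_of_cols n L *\<^sub>v c1) $ i = (\<Sum>j<?l. L ! j $ i * c $ j)"
      by (subst mc_index) (auto simp: c1_def i)
    thus "(mat_of_cols n L *\<^sub>v c1) $ i = 0\<^sub>v n $ i" using eq[OF i] t0 i by simp
  qed simp
  hence "c1 = 0\<^sub>v ?l" using ind unfolding indep_def by (auto simp: c1_def)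
  hence "c $ j = 0" if "j < ?l" for j using that unfolding c1_def by (metis index_vec index_zero_vec(1))
  thus "c = 0\<^sub>v (length (L @ [x]))"
    using t0 c' by (intro eq_vecI) (auto simp: less_Suc_eq)
qed

lemma extend_indep: fixes L :: "'a::field vec list"
  assumes S: "S \<subseteq> carrier_vec n" and ind: "indep n L"
  shows "\<exists>eta. set eta \<subseteq> S \<and> indep n (L @ eta) \<and> (\<forall>x \<in> S. inspan n (L @ eta) x)"
proof -
  define K where "K = {k. \<exists>eta. set eta \<subseteq> S \<and> indep n (L @ eta) \<and> length eta = k}"
  have Kb: "K \<subseteq> {..n}" unfolding K_def using indep_length by fastforce
  hence fin: "finite K" using finite_subset by blast
  have "0 \<in> K" unfolding K_def using ind by (intro CollectI exI[of _ "[]"]) auto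
  hence ne: "K \<noteq> {}" by blast
  have "Max K \<in> K" using Max_in[OF fin ne] .
  then obtain eta where eta: "set eta \<subseteq> S" "indep n (L @ eta)" "length eta = Max K"
    unfolding K_def by blast
  have "inspan n (L @ eta) x" if xS: "x \<in> S" for x
  proof (rule ccontr)
    assume nx: "\<not> inspan n (L @ eta) x"
    have "indep n ((L @ eta) @ [x])" by (rule indep_snoc[OF eta(2) _ nx]) (use xS S in auto)
    hence "length (eta @ [x]) \<in> K" unfolding K_def using eta xS
      by (intro CollectI exI[of _ "eta @ [x]"]) auto
    hence "Suc (Max K) \<in> K" using eta(3) by simp
    thus False using Max_ge[OF fin] by fastforce
  qed
  thus ?thesis using eta by blast
qed


lemma mc_app3:
  assumes "c1 \<in> carrier_vec (length L1)" "c2 \<in> carrier_vec (length L2)" "c3 \<in> carrier_vec (length L3)"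
  shows "mat_of_cols n (L1 @ L2 @ L3) *\<^sub>v (c1 @\<^sub>v c2 @\<^sub>v c3)
     = mat_of_cols n L1 *\<^sub>v c1 + mat_of_cols n L2 *\<^sub>v c2 + mat_of_cols n L3 *\<^sub>v c3"
proof -
  have c23: "c2 @\<^sub>v c3 \<in> carrier_vec (length (L2 @ L3))" using assms by simp
  have "mat_of_cols n (L1 @ L2 @ L3) *\<^sub>v (c1 @\<^sub>v c2 @\<^sub>v c3)
      = mat_of_cols n L1 *\<^sub>v c1 + mat_of_cols n (L2 @ L3) *\<^sub>v (c2 @\<^sub>v c3)"
    by (rule mc_append[OF assms(1) c23])
  also have "mat_of_cols n (L2 @ L3) *\<^sub>v (c2 @\<^sub>v c3) = mat_of_cols n L2 *\<^sub>v c2 + mat_of_cols n L3 *\<^sub>v c3"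
    by (rule mc_append[OF assms(2,3)])
  finally show ?thesis
    by (simp add: assoc_add_vec[of _ n])
qed

lemma mat_vec_mc:
  fixes M :: "'a::field mat"
  assumes M: "M \<in> carrier_mat k n" and L: "set L \<subseteq> carrier_vec n" and c: "c \<in> carrier_vec (length L)"
  shows "M *\<^sub>v (mat_of_cols n L *\<^sub>v c) = mat_of_cols k (map (\<lambda>v. M *\<^sub>v v) L) *\<^sub>v c"
proof -
  have "M *\<^sub>v (mat_of_cols n L *\<^sub>v c) = (M * mat_of_cols n L) *\<^sub>v c"
    by (rule assoc_mult_mat_vec[OF M mat_of_cols_carrier(1) c, symmetric])
  also have "M * mat_of_cols n L = mat_of_cols k (map (\<lambda>v. M *\<^sub>v v) L)"
    by (rule mc_map_mult[OF M L, symmetric])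
  finally show ?thesis .
qed

lemma mc_zero_cols:
  assumes "\<forall>v \<in> set L. v = 0\<^sub>v k" "c \<in> carrier_vec (length L)"
  shows "mat_of_cols k L *\<^sub>v c = (0\<^sub>v k :: 'a::field vec)"
proof (rule eq_vecI)
  fix i assume "i < dim_vec (0\<^sub>v k :: 'a vec)" hence i: "i < k" by simp
  have "(mat_of_cols k L *\<^sub>v c) $ i = (\<Sum>j<length L. L ! j $ i * c $ j)" by (rule mc_index[OF assms(2) i])
  also have "\<dots> = 0"
  proof (intro sum.neutral ballI)
    fix j assume "j \<in> {..<length L}"
    hence "L ! j = 0\<^sub>v k" using assms(1) by simp
    thus "L ! j $ i * c $ j = 0" using i by simp
  qed
  finally show "(mat_of_cols k L *\<^sub>v c) $ i = 0\<^sub>v k $ i" using i by simp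
qed simp

lemma mat_vec_zero: assumes "A \<in> carrier_mat k l" shows "A *\<^sub>v 0\<^sub>v l = (0\<^sub>v k :: 'a::field vec)"
proof (rule eq_vecI)
  fix i assume "i < dim_vec (0\<^sub>v k :: 'a vec)"
  hence i: "i < k" by simp
  have "row A i \<in> carrier_vec l" using assms i by auto
  thus "(A *\<^sub>v 0\<^sub>v l) $ i = 0\<^sub>v k $ i" using i assms by simp
qed (use assms in simp)

lemma zero_mat_vec: assumes "y \<in> carrier_vec l" shows "0\<^sub>m k l *\<^sub>v y = (0\<^sub>v k :: 'a::field vec)"
proof (rule eq_vecI)
  fix i assume "i < dim_vec (0\<^sub>v k :: 'a vec)"
  hence i: "i < k" by simp
  have "row (0\<^sub>m k l) i = (0\<^sub>v l :: 'a vec)" using i by (intro eq_vecI) auto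
  thus "(0\<^sub>m k l *\<^sub>v y) $ i = 0\<^sub>v k $ i" using i assms by simp
qed simp

locale cx =
  fixes n :: "nat \<Rightarrow> nat" and D :: "nat \<Rightarrow> 'a::field mat" and d :: nat
  assumes cx: "is_complex n D d"
begin

lemma Dcar: "j < d \<Longrightarrow> D j \<in> carrier_mat (n (Suc j)) (n j)"
  using cx unfolding is_complex_def by auto

lemma DD: "Suc j < d \<Longrightarrow> D (Suc j) * D j = 0\<^sub>m (n (Suc (Suc j))) (n j)"
  using cx unfolding is_complex_def by auto

lemma cocyc_iff: "x \<in> cocyc n D d j \<longleftrightarrow> x \<in> carrier_vec (n j) \<and> (j < d \<longrightarrow> D j *\<^sub>v x = 0\<^sub>v (n (Suc j)))"
  unfolding cocyc_def by auto

lemma cocyc_carrier: "cocyc n D d j \<subseteq> carrier_vec (n j)"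
  unfolding cocyc_def by auto

lemma span_cocyc:
  assumes L: "set L \<subseteq> cocyc n D d j" and x: "inspan (n j) L x"
  shows "x \<in> cocyc n D d j"
proof -
  obtain c where c: "c \<in> carrier_vec (length L)" "x = mat_of_cols (n j) L *\<^sub>v c"
    using x unfolding inspan_def by auto
  have Lc: "set L \<subseteq> carrier_vec (n j)" using L cocyc_carrier by blast
  have "D j *\<^sub>v x = 0\<^sub>v (n (Suc j))" if jd: "j < d"
  proof -
    have "D j *\<^sub>v x = mat_of_cols (n (Suc j)) (map (\<lambda>v. D j *\<^sub>v v) L) *\<^sub>v c"
      unfolding c(2) by (rule mat_vec_mc[OF Dcar[OF jd] Lc c(1)])
    also have "\<dots> = 0\<^sub>v (n (Suc j))"
      by (rule mc_zero_cols) (use L jd c(1) in \<open>auto simp: cocyc_iff\<close>)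
    finally show ?thesis .
  qed
  thus ?thesis unfolding cocyc_iff using c(2) by simp
qed

lemma cobound_carrier: assumes "j \<le> d" shows "cobound n D j \<subseteq> carrier_vec (n j)"
proof (cases j)
  case 0 thus ?thesis unfolding cobound_def by auto
next
  case (Suc i)
  hence "D i \<in> carrier_mat (n j) (n i)" using Dcar[of i] assms by simp
  thus ?thesis unfolding cobound_def using Suc by auto
qed

lemma cobound_sub_cocyc: assumes "j \<le> d" shows "cobound n D j \<subseteq> cocyc n D d j"
proof
  fix x assume x: "x \<in> cobound n D j"
  show "x \<in> cocyc n D d j"
  proof (cases j)
    case 0
    have "D 0 *\<^sub>v 0\<^sub>v (n 0) = 0\<^sub>v (n (Suc 0))" if "0 < d" using Dcar[of 0] that by (simp add: mat_vec_zero)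
    thus ?thesis using x 0 unfolding cobound_def cocyc_iff by auto
  next
    case (Suc i)
    then obtain y where y: "y \<in> carrier_vec (n i)" "x = D i *\<^sub>v y" using x unfolding cobound_def by auto
    have xc: "x \<in> carrier_vec (n j)" using y Dcar[of i] Suc assms by auto
    have "D j *\<^sub>v x = 0\<^sub>v (n (Suc j))" if jd: "j < d"
    proof -
      have i1: "Suc i < d" and i0: "i < d" using Suc jd by auto
      have "D j *\<^sub>v x = D (Suc i) *\<^sub>v (D i *\<^sub>v y)" using y(2) Suc by simp
      also have "\<dots> = (D (Suc i) * D i) *\<^sub>v y"
        by (rule assoc_mult_mat_vec[OF Dcar[OF i1] Dcar[OF i0] y(1), symmetric])
      also have "\<dots> = 0\<^sub>v (n (Suc j))" using DD[of i] Suc jd y by (simp add: zero_mat_vec)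
      finally show ?thesis .
    qed
    thus ?thesis unfolding cocyc_iff using xc by simp
  qed
qed

end

locale dat = cx +
  fixes a eta :: "nat \<Rightarrow> 'a::field vec list"
  assumes pd: "phi_datum n D d (a, eta)"
begin

abbreviation "b j \<equiv> dprev D a j"

lemma a_car: "j \<le> d \<Longrightarrow> set (a j) \<subseteq> carrier_vec (n j)"
  using pd unfolding phi_datum_def by auto

lemma eta_cocyc: "j \<le> d \<Longrightarrow> set (eta j) \<subseteq> cocyc n D d j"
  using pd unfolding phi_datum_def by auto

lemma eta_car: "j \<le> d \<Longrightarrow> set (eta j) \<subseteq> carrier_vec (n j)"
  using eta_cocyc cocyc_carrier by blast

lemma a_d: "a d = []"
  using pd unfolding phi_datum_def by auto

lemma len: "j \<le> d \<Longrightarrow> length (b j) + length (eta j) + length (a j) = n j"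
  using pd unfolding phi_datum_def by auto

lemma det_nz: "j \<le> d \<Longrightarrow> det (mat_of_cols (n j) (b j @ eta j @ a j)) \<noteq> 0"
  using pd unfolding phi_datum_def phi_mat_def by auto

lemma b_len: "length (b j) = (if j = 0 then 0 else length (a (j - 1)))"
  unfolding dprev_def by auto

lemma b_car: assumes "j \<le> d" shows "set (b j) \<subseteq> carrier_vec (n j)"
proof (cases j)
  case 0 thus ?thesis by (simp add: dprev_def)
next
  case (Suc i)
  hence "i < d" using assms by simp
  thus ?thesis using Suc Dcar[of i] a_car[of i] by (auto simp: dprev_def)
qed

lemma all_car: "j \<le> d \<Longrightarrow> set (b j @ eta j @ a j) \<subseteq> carrier_vec (n j)"
  using b_car eta_car a_car by auto

lemma all_len: "j \<le> d \<Longrightarrow> length (b j @ eta j @ a j) = n j"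
  using len[of j] by simp

lemma all_indep: "j \<le> d \<Longrightarrow> indep (n j) (b j @ eta j @ a j)"
  by (rule det_indep[OF all_len det_nz])

lemma all_span: "j \<le> d \<Longrightarrow> x \<in> carrier_vec (n j) \<Longrightarrow> inspan (n j) (b j @ eta j @ a j) x"
  by (rule det_span[OF all_len det_nz])

lemma b_indep: "j \<le> d \<Longrightarrow> indep (n j) (b j)"
  using all_indep indep_app_left by blast

lemma beta_indep: "j \<le> d \<Longrightarrow> indep (n j) (b j @ eta j)"
  using all_indep indep_app_left by (metis append.assoc)

lemma b_cocyc: assumes "j \<le> d" shows "set (b j) \<subseteq> cocyc n D d j"
proof (cases j)
  case 0 thus ?thesis by (simp add: dprev_def)
next
  case (Suc i)
  hence i: "i < d" using assms by simp
  have "D i *\<^sub>v v \<in> cobound n D j" if "v \<in> set (a i)" for v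
    using that a_car[of i] i Suc unfolding cobound_def by auto
  hence "set (b j) \<subseteq> cobound n D j" using Suc by (auto simp: dprev_def)
  thus ?thesis using cobound_sub_cocyc[OF assms] by blast
qed

lemma b_span_cobound: assumes j: "j \<le> d" and x: "inspan (n j) (b j) x"
  shows "x \<in> cobound n D j"
proof (cases j)
  case 0
  hence "x = 0\<^sub>v (n 0)" using x mc_zero_cols[of "[]" "n 0"] unfolding inspan_def dprev_def
    by auto
  thus ?thesis using 0 unfolding cobound_def by simp
next
  case (Suc i)
  hence i: "i < d" using j by simp
  obtain c where c: "c \<in> carrier_vec (length (b j))" "x = mat_of_cols (n j) (b j) *\<^sub>v c"
    using x unfolding inspan_def by auto
  have c': "c \<in> carrier_vec (length (a i))" using c(1) Suc by (simp add: dprev_def)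
  have "x = D i *\<^sub>v (mat_of_cols (n i) (a i) *\<^sub>v c)"
    using c(2) Suc by (simp add: dprev_def mat_vec_mc[OF Dcar[OF i] a_car[of i] c'] i less_imp_le)
  thus ?thesis using Suc unfolding cobound_def by auto
qed

end


definition sl :: "'a vec \<Rightarrow> nat \<Rightarrow> nat \<Rightarrow> 'a vec" where
  "sl c s l = vec l (\<lambda>i. c $ (s + i))"

lemma sl_carrier[simp]: "sl c s l \<in> carrier_vec l" by (simp add: sl_def)

lemma sl_split3: assumes "c \<in> carrier_vec (k1 + k2 + k3)"
  shows "c = sl c 0 k1 @\<^sub>v sl c k1 k2 @\<^sub>v sl c (k1 + k2) k3"
  by (rule eq_vecI) (use assms in \<open>auto simp: sl_def\<close>)

lemma sl_split2: assumes "c \<in> carrier_vec (k1 + k2)"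
  shows "c = sl c 0 k1 @\<^sub>v sl c k1 k2"
  by (rule eq_vecI) (use assms in \<open>auto simp: sl_def\<close>)

lemma mc_nil: "c \<in> carrier_vec 0 \<Longrightarrow> mat_of_cols k [] *\<^sub>v c = (0\<^sub>v k :: 'a::field vec)"
  by (rule mc_zero_cols) auto

context dat
begin

definition P :: "nat \<Rightarrow> 'a mat" where "P j = mat_of_cols (n j) (b j @ eta j @ a j)"

lemma P_phi: "phi_mat n D a eta j = P j" unfolding phi_mat_def P_def ..

lemma P_car: "P j \<in> carrier_mat (n j) (length (b j @ eta j @ a j))" unfolding P_def by (rule mat_of_cols_carrier(1))

lemma P_split: assumes "c1 \<in> carrier_vec (length (b j))" "c2 \<in> carrier_vec (length (eta j))" "c3 \<in> carrier_vec (length (a j))"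
  shows "P j *\<^sub>v (c1 @\<^sub>v c2 @\<^sub>v c3) = mat_of_cols (n j) (b j) *\<^sub>v c1 + mat_of_cols (n j) (eta j) *\<^sub>v c2 + mat_of_cols (n j) (a j) *\<^sub>v c3"
  unfolding P_def by (rule mc_app3[OF assms])

lemma ba_split: assumes "j \<le> d" "x \<in> carrier_vec (n j)"
  obtains u w where "u \<in> carrier_vec (length (b j @ eta j))" "w \<in> carrier_vec (length (a j))"
    "x = mat_of_cols (n j) (b j @ eta j) *\<^sub>v u + mat_of_cols (n j) (a j) *\<^sub>v w"
proof -
  have "inspan (n j) ((b j @ eta j) @ a j) x" using all_span[OF assms] by simp
  then obtain y z where yz: "inspan (n j) (b j @ eta j) y" "inspan (n j) (a j) z" "x = y + z"
    by (rule inspan_app_split)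
  thus ?thesis using that unfolding inspan_def by blast
qed

lemma cobound_b: assumes j: "j \<le> d" and x: "x \<in> cobound n D j"
  shows "\<exists>u \<in> carrier_vec (length (b j)). x = mat_of_cols (n j) (b j) *\<^sub>v u"
proof (cases j)
  case 0
  hence "x = 0\<^sub>v (n 0)" using x unfolding cobound_def by simp
  thus ?thesis using 0 by (intro bexI[of _ "0\<^sub>v 0"]) (simp_all add: mc_nil dprev_def)
next
  case (Suc i)
  hence i: "i < d" using j by simp
  obtain y where y: "y \<in> carrier_vec (n i)" "x = D i *\<^sub>v y" using x Suc unfolding cobound_def by auto
  obtain u w where uw: "u \<in> carrier_vec (length (b i @ eta i))" "w \<in> carrier_vec (length (a i))"
    "y = mat_of_cols (n i) (b i @ eta i) *\<^sub>v u + mat_of_cols (n i) (a i) *\<^sub>v w"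
    using ba_split[OF _ y(1)] i by auto
  have c1: "mat_of_cols (n i) (b i @ eta i) *\<^sub>v u \<in> cocyc n D d i"
    by (rule span_cocyc[of "b i @ eta i"]) (use b_cocyc[of i] eta_cocyc[of i] i uw(1) in \<open>auto simp: inspan_def\<close>)
  have "D i *\<^sub>v y = D i *\<^sub>v (mat_of_cols (n i) (b i @ eta i) *\<^sub>v u) + D i *\<^sub>v (mat_of_cols (n i) (a i) *\<^sub>v w)"
    unfolding uw(3) by (rule mult_add_distrib_mat_vec[OF Dcar[OF i]]) auto
  also have "D i *\<^sub>v (mat_of_cols (n i) (b i @ eta i) *\<^sub>v u) = 0\<^sub>v (n (Suc i))"
    using c1 i unfolding cocyc_iff by auto
  also have "D i *\<^sub>v (mat_of_cols (n i) (a i) *\<^sub>v w) = mat_of_cols (n j) (b j) *\<^sub>v w"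
    using mat_vec_mc[OF Dcar[OF i] a_car[of i] uw(2)] i Suc by (simp add: dprev_def)
  finally have "x = mat_of_cols (n j) (b j) *\<^sub>v w" using y(2) Suc by simp
  moreover have "w \<in> carrier_vec (length (b j))" using uw(2) Suc by (simp add: dprev_def)
  ultimately show ?thesis by blast
qed

lemma cocyc_beta: assumes j: "j \<le> d" and x: "x \<in> cocyc n D d j"
  shows "\<exists>u \<in> carrier_vec (length (b j @ eta j)). x = mat_of_cols (n j) (b j @ eta j) *\<^sub>v u"
proof -
  have xc: "x \<in> carrier_vec (n j)" using x cocyc_carrier by blast
  obtain u w where uw: "u \<in> carrier_vec (length (b j @ eta j))" "w \<in> carrier_vec (length (a j))"
    "x = mat_of_cols (n j) (b j @ eta j) *\<^sub>v u + mat_of_cols (n j) (a j) *\<^sub>v w"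
    using ba_split[OF j xc] by auto
  have az: "mat_of_cols (n j) (a j) *\<^sub>v w = 0\<^sub>v (n j)"
  proof (cases "j < d")
    case False
    hence "j = d" using j by simp
    thus ?thesis using a_d mc_nil uw(2) by simp
  next
    case True
    have c1: "mat_of_cols (n j) (b j @ eta j) *\<^sub>v u \<in> cocyc n D d j"
      by (rule span_cocyc[of "b j @ eta j"]) (use b_cocyc[of j] eta_cocyc[of j] j uw(1) in \<open>auto simp: inspan_def\<close>)
    have "0\<^sub>v (n (Suc j)) = D j *\<^sub>v x" using x True unfolding cocyc_iff by simp
    also have "\<dots> = D j *\<^sub>v (mat_of_cols (n j) (b j @ eta j) *\<^sub>v u) + D j *\<^sub>v (mat_of_cols (n j) (a j) *\<^sub>v w)"
      unfolding uw(3) by (rule mult_add_distrib_mat_vec[OF Dcar[OF True]]) auto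
    also have "D j *\<^sub>v (mat_of_cols (n j) (b j @ eta j) *\<^sub>v u) = 0\<^sub>v (n (Suc j))"
      using c1 True unfolding cocyc_iff by auto
    also have "D j *\<^sub>v (mat_of_cols (n j) (a j) *\<^sub>v w) = mat_of_cols (n (Suc j)) (b (Suc j)) *\<^sub>v w"
      using mat_vec_mc[OF Dcar[OF True] a_car[of j] uw(2)] j by (simp add: dprev_def)
    finally have z: "mat_of_cols (n (Suc j)) (b (Suc j)) *\<^sub>v w = 0\<^sub>v (n (Suc j))"
      by (simp add: dprev_def)
    have "w = 0\<^sub>v (length (b (Suc j)))"
      using b_indep[of "Suc j"] True z uw(2) unfolding indep_def by (simp add: dprev_def)
    thus ?thesis by (simp add: dprev_def)
  qed
  have "x = mat_of_cols (n j) (b j @ eta j) *\<^sub>v u" using uw(3) az by simp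
  thus ?thesis using uw(1) by blast
qed

lemma b_in_cobound: assumes "j \<le> d" "u \<in> carrier_vec (length (b j))"
  shows "mat_of_cols (n j) (b j) *\<^sub>v u \<in> cobound n D j"
  by (rule b_span_cobound[OF assms(1)]) (use assms(2) in \<open>auto simp: inspan_def\<close>)

lemma cohom: assumes j: "j \<le> d" shows "cohom_basis n D d j (eta j)"
  unfolding cohom_basis_def
proof (intro conjI ballI impI)
  show "set (eta j) \<subseteq> cocyc n D d j" by (rule eta_cocyc[OF j])
next
  fix c assume c: "c \<in> carrier_vec (length (eta j))"
    and cb: "mat_of_cols (n j) (eta j) *\<^sub>v c \<in> cobound n D j"
  obtain u where u: "u \<in> carrier_vec (length (b j))" "mat_of_cols (n j) (eta j) *\<^sub>v c = mat_of_cols (n j) (b j) *\<^sub>v u"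
    using cobound_b[OF j cb] by auto
  have z1: "0\<^sub>v (length (b j)) \<in> carrier_vec (length (b j))" by simp
  have z2: "0\<^sub>v (length (eta j)) \<in> carrier_vec (length (eta j))" by simp
  have z3: "0\<^sub>v (length (a j)) \<in> carrier_vec (length (a j))" by simp
  have "P j *\<^sub>v (0\<^sub>v (length (b j)) @\<^sub>v c @\<^sub>v 0\<^sub>v (length (a j))) = mat_of_cols (n j) (eta j) *\<^sub>v c"
    unfolding P_split[OF z1 c z3] by (simp add: mc_zero)
  also have "\<dots> = P j *\<^sub>v (u @\<^sub>v 0\<^sub>v (length (eta j)) @\<^sub>v 0\<^sub>v (length (a j)))"
    unfolding P_split[OF u(1) z2 z3] u(2) by (simp add: mc_zero)
  finally have "0\<^sub>v (length (b j)) @\<^sub>v c @\<^sub>v 0\<^sub>v (length (a j)) = u @\<^sub>v 0\<^sub>v (length (eta j)) @\<^sub>v 0\<^sub>v (length (a j))"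
    using indep_unique[OF all_indep[OF j]] c u(1) unfolding P_def by auto
  thus "c = 0\<^sub>v (length (eta j))"
    using append_vec_eq[OF z1 u(1)] append_vec_eq[OF c z2] by simp
next
  fix x assume x: "x \<in> cocyc n D d j"
  obtain u where u: "u \<in> carrier_vec (length (b j @ eta j))" "x = mat_of_cols (n j) (b j @ eta j) *\<^sub>v u"
    using cocyc_beta[OF j x] by auto
  have u': "u \<in> carrier_vec (length (b j) + length (eta j))" using u(1) by simp
  define u1 where "u1 = sl u 0 (length (b j))"
  define u2 where "u2 = sl u (length (b j)) (length (eta j))"
  have "x = mat_of_cols (n j) (b j @ eta j) *\<^sub>v (u1 @\<^sub>v u2)"
    using u(2) sl_split2[OF u'] unfolding u1_def u2_def by simp
  also have "\<dots> = mat_of_cols (n j) (b j) *\<^sub>v u1 + mat_of_cols (n j) (eta j) *\<^sub>v u2"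
    by (rule mc_append) (auto simp: u1_def u2_def)
  finally have "x - mat_of_cols (n j) (eta j) *\<^sub>v u2 = mat_of_cols (n j) (b j) *\<^sub>v u1"
    by (intro eq_vecI) auto
  moreover have "mat_of_cols (n j) (b j) *\<^sub>v u1 \<in> cobound n D j"
    by (rule b_in_cobound[OF j]) (simp add: u1_def)
  ultimately have "x - mat_of_cols (n j) (eta j) *\<^sub>v u2 \<in> cobound n D j" by simp
  moreover have "u2 \<in> carrier_vec (length (eta j))" by (simp add: u2_def)
  ultimately show "\<exists>c\<in>carrier_vec (length (eta j)). x - mat_of_cols (n j) (eta j) *\<^sub>v c \<in> cobound n D j"
    by blast
qed

end


lemma det_block_ut:
  fixes T :: "'a::field mat"
  assumes T: "T \<in> carrier_mat (k + l) (k + l)"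
    and z: "\<And>i j. k \<le> i \<Longrightarrow> i < k + l \<Longrightarrow> j < k \<Longrightarrow> T $$ (i, j) = 0"
  shows "det T = det (mat k k (\<lambda>(i,j). T $$ (i,j))) * det (mat l l (\<lambda>(i,j). T $$ (k + i, k + j)))"
proof -
  define A where "A = mat k k (\<lambda>(i,j). T $$ (i,j))"
  define B where "B = mat k l (\<lambda>(i,j). T $$ (i,k + j))"
  define E where "E = mat l l (\<lambda>(i,j). T $$ (k + i, k + j))"
  have "T = four_block_mat A B (0\<^sub>m l k) E"
    by (rule eq_matI) (use T z in \<open>auto simp: A_def B_def E_def\<close>)
  moreover have "det (four_block_mat A B (0\<^sub>m l k) E) = det A * det E"
    by (rule det_four_block_mat_lower_left_zero) (auto simp: A_def B_def E_def)
  ultimately have "det T = det A * det E" by simp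
  thus ?thesis unfolding A_def E_def .
qed

lemma app3_lo: assumes "c1 \<in> carrier_vec k1" "c2 \<in> carrier_vec k2" "c3 \<in> carrier_vec k3" "i < k1"
  shows "(c1 @\<^sub>v c2 @\<^sub>v c3) $ i = c1 $ i"
proof -
  have d: "dim_vec c1 = k1" "dim_vec (c2 @\<^sub>v c3) = k2 + k3" using assms(1-3) by auto
  show ?thesis by (subst index_append_vec(1)) (use d assms(4) in auto)
qed

lemma app3_mid: assumes "c1 \<in> carrier_vec k1" "c2 \<in> carrier_vec k2" "c3 \<in> carrier_vec k3" "k1 \<le> i" "i < k1 + k2"
  shows "(c1 @\<^sub>v c2 @\<^sub>v c3) $ i = c2 $ (i - k1)"
proof -
  have d: "dim_vec c1 = k1" "dim_vec c2 = k2" "dim_vec c3 = k3" using assms(1-3) by auto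
  have "(c1 @\<^sub>v c2 @\<^sub>v c3) $ i = (c2 @\<^sub>v c3) $ (i - k1)"
    by (subst index_append_vec(1)) (use d assms(4,5) in auto)
  also have "\<dots> = c2 $ (i - k1)"
    by (subst index_append_vec(1)) (use d assms(4,5) in auto)
  finally show ?thesis .
qed

lemma app3_hi: assumes "c1 \<in> carrier_vec k1" "c2 \<in> carrier_vec k2" "c3 \<in> carrier_vec k3" "k1 + k2 \<le> i" "i < k1 + k2 + k3"
  shows "(c1 @\<^sub>v c2 @\<^sub>v c3) $ i = c3 $ (i - k1 - k2)"
proof -
  have d: "dim_vec c1 = k1" "dim_vec c2 = k2" "dim_vec c3 = k3" using assms(1-3) by auto
  have "(c1 @\<^sub>v c2 @\<^sub>v c3) $ i = (c2 @\<^sub>v c3) $ (i - k1)"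
    by (subst index_append_vec(1)) (use d assms(4,5) in auto)
  also have "\<dots> = c3 $ (i - k1 - k2)"
    by (subst index_append_vec(1)) (use d assms(4,5) in auto)
  finally show ?thesis .
qed

lemma app3_car: assumes "c1 \<in> carrier_vec k1" "c2 \<in> carrier_vec k2" "c3 \<in> carrier_vec k3"
  shows "c1 @\<^sub>v c2 @\<^sub>v c3 \<in> carrier_vec (k1 + k2 + k3)"
proof -
  have "c2 @\<^sub>v c3 \<in> carrier_vec (k2 + k3)" using assms(2,3) by (rule append_carrier_vec)
  hence "c1 @\<^sub>v c2 @\<^sub>v c3 \<in> carrier_vec (k1 + (k2 + k3))" by (rule append_carrier_vec[OF assms(1)])
  thus ?thesis by (simp add: add.assoc)
qed

lemma alt_pow_mult: "alt_pow j (x * y) = alt_pow j x * (alt_pow j y :: 'a::field)"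
  unfolding alt_pow_def by simp

lemma alt_pow_div: "alt_pow j (x / y) = alt_pow j x / (alt_pow j y :: 'a::field)"
  unfolding alt_pow_def by (simp add: divide_inverse)

lemma alt_pow_nz: "x \<noteq> 0 \<Longrightarrow> alt_pow j x \<noteq> (0 :: 'a::field)"
  unfolding alt_pow_def by simp

lemma alt_pow_one[simp]: "alt_pow j 1 = (1 :: 'a::field)"
  unfolding alt_pow_def by simp

lemma alt_pow_Suc: "x \<noteq> 0 \<Longrightarrow> alt_pow j x * alt_pow (Suc j) x = (1 :: 'a::field)"
  unfolding alt_pow_def by simp

lemma telescope:
  fixes x y :: "nat \<Rightarrow> 'a::field"
  assumes x0: "x 0 = 1" and yd: "y d = 1" and xy: "\<And>i. i < d \<Longrightarrow> x (Suc i) = y i"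
    and ynz: "\<And>i. i \<le> d \<Longrightarrow> y i \<noteq> 0"
  shows "(\<Prod>j\<le>d. alt_pow j (x j * y j)) = 1"
proof -
  have "k \<le> d \<Longrightarrow> (\<Prod>j\<le>k. alt_pow j (x j * y j)) = alt_pow k (y k)" for k
  proof (induction k)
    case 0 thus ?case using x0 by simp
  next
    case (Suc k)
    hence "(\<Prod>j\<le>Suc k. alt_pow j (x j * y j)) = alt_pow k (y k) * alt_pow (Suc k) (y k * y (Suc k))"
      using xy by simp
    also have "\<dots> = (alt_pow k (y k) * alt_pow (Suc k) (y k)) * alt_pow (Suc k) (y (Suc k))"
      by (simp add: alt_pow_mult)
    also have "\<dots> = alt_pow (Suc k) (y (Suc k))" using alt_pow_Suc[OF ynz[of k]] Suc by simp
    finally show ?case .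
  qed
  from this[of d] show ?thesis using yd by simp
qed

context dat
begin

lemma P_sq: "j \<le> d \<Longrightarrow> P j \<in> carrier_mat (n j) (n j)"
  using P_car[of j] all_len[of j] by simp

lemma P_dimr[simp]: "dim_row (P j) = n j" unfolding P_def by simp

lemma P_vcar[simp]: "P j *\<^sub>v c \<in> carrier_vec (n j)" by (simp add: carrier_vecI)

definition coord :: "nat \<Rightarrow> 'a vec \<Rightarrow> 'a vec" where
  "coord j x = (SOME c. c \<in> carrier_vec (n j) \<and> x = P j *\<^sub>v c)"

lemma coord: assumes "j \<le> d" "x \<in> carrier_vec (n j)"
  shows "coord j x \<in> carrier_vec (n j)" "P j *\<^sub>v coord j x = x"
proof -
  have "\<exists>c. c \<in> carrier_vec (n j) \<and> x = P j *\<^sub>v c"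
    using all_span[OF assms] all_len[OF assms(1)] unfolding inspan_def P_def by auto
  hence "coord j x \<in> carrier_vec (n j) \<and> x = P j *\<^sub>v coord j x"
    unfolding coord_def by (rule someI_ex)
  thus "coord j x \<in> carrier_vec (n j)" "P j *\<^sub>v coord j x = x" by auto
qed

lemma coord_unique: assumes "j \<le> d" "c \<in> carrier_vec (n j)" "x = P j *\<^sub>v c"
  shows "coord j x = c"
proof -
  have xc: "x \<in> carrier_vec (n j)" using assms P_sq by auto
  show ?thesis
    using indep_unique[OF all_indep[OF assms(1)], of "coord j x" c] coord[OF assms(1) xc] assms all_len[OF assms(1)]
    unfolding P_def by auto
qed

lemma coord_split: assumes j: "j \<le> d" "c1 \<in> carrier_vec (length (b j))" "c2 \<in> carrier_vec (length (eta j))" "c3 \<in> carrier_vec (length (a j))"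
  "x = mat_of_cols (n j) (b j) *\<^sub>v c1 + mat_of_cols (n j) (eta j) *\<^sub>v c2 + mat_of_cols (n j) (a j) *\<^sub>v c3"
  shows "coord j x = c1 @\<^sub>v c2 @\<^sub>v c3"
proof (rule coord_unique[OF j(1)])
  show "c1 @\<^sub>v c2 @\<^sub>v c3 \<in> carrier_vec (n j)" using app3_car[OF j(2-4)] len[OF j(1)] by simp
  show "x = P j *\<^sub>v (c1 @\<^sub>v c2 @\<^sub>v c3)" using P_split[OF j(2-4)] j(5) by simp
qed

lemma coord_cobound: assumes j: "j \<le> d" and x: "x \<in> cobound n D j"
  and i: "length (b j) \<le> i" "i < n j"
  shows "coord j x $ i = 0"
proof -
  obtain u where u: "u \<in> carrier_vec (length (b j))" "x = mat_of_cols (n j) (b j) *\<^sub>v u"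
    using cobound_b[OF j x] by auto
  have "coord j x = u @\<^sub>v 0\<^sub>v (length (eta j)) @\<^sub>v 0\<^sub>v (length (a j))"
    by (rule coord_split[OF j u(1)]) (auto simp: u(2) mc_zero)
  moreover have "(u @\<^sub>v 0\<^sub>v (length (eta j)) @\<^sub>v 0\<^sub>v (length (a j))) $ i = 0"
  proof (cases "i < length (b j) + length (eta j)")
    case True thus ?thesis using app3_mid[OF u(1) zero_carrier_vec[of "length (eta j)"] zero_carrier_vec[of "length (a j)"], of i] i by simp
  next
    case False thus ?thesis using app3_hi[OF u(1) zero_carrier_vec[of "length (eta j)"] zero_carrier_vec[of "length (a j)"], of i] i len[OF j] by simp
  qed
  ultimately show ?thesis by simp
qed

lemma coord_cocyc: assumes j: "j \<le> d" and x: "x \<in> cocyc n D d j"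
  and i: "length (b j) + length (eta j) \<le> i" "i < n j"
  shows "coord j x $ i = 0"
proof -
  obtain u where u: "u \<in> carrier_vec (length (b j @ eta j))" "x = mat_of_cols (n j) (b j @ eta j) *\<^sub>v u"
    using cocyc_beta[OF j x] by auto
  have u': "u \<in> carrier_vec (length (b j) + length (eta j))" using u(1) by simp
  define u1 where "u1 = sl u 0 (length (b j))"
  define u2 where "u2 = sl u (length (b j)) (length (eta j))"
  have "x = mat_of_cols (n j) (b j @ eta j) *\<^sub>v (u1 @\<^sub>v u2)"
    using u(2) sl_split2[OF u'] unfolding u1_def u2_def by simp
  also have "\<dots> = mat_of_cols (n j) (b j) *\<^sub>v u1 + mat_of_cols (n j) (eta j) *\<^sub>v u2"
    by (rule mc_append) (auto simp: u1_def u2_def)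
  finally have xe: "x = mat_of_cols (n j) (b j) *\<^sub>v u1 + mat_of_cols (n j) (eta j) *\<^sub>v u2" .
  have "coord j x = u1 @\<^sub>v u2 @\<^sub>v 0\<^sub>v (length (a j))"
    by (rule coord_split[OF j]) (auto simp: xe mc_zero u1_def u2_def)
  moreover have "(u1 @\<^sub>v u2 @\<^sub>v 0\<^sub>v (length (a j))) $ i = 0\<^sub>v (length (a j)) $ (i - length (b j) - length (eta j))"
    by (rule app3_hi[OF _ _ zero_carrier_vec]) (use i len[OF j] in \<open>auto simp: u1_def u2_def\<close>)
  ultimately show ?thesis using i len[OF j] by simp
qed

lemma D_P: assumes i: "i < d" and c: "c \<in> carrier_vec (n i)"
  shows "D i *\<^sub>v (P i *\<^sub>v c) = mat_of_cols (n (Suc i)) (b (Suc i)) *\<^sub>v sl c (length (b i) + length (eta i)) (length (a i))"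
proof -
  have i': "i \<le> d" using i by simp
  have c': "c \<in> carrier_vec (length (b i) + length (eta i) + length (a i))" using c len[OF i'] by simp
  define c1 where "c1 = sl c 0 (length (b i))"
  define c2 where "c2 = sl c (length (b i)) (length (eta i))"
  define c3 where "c3 = sl c (length (b i) + length (eta i)) (length (a i))"
  have "P i *\<^sub>v c = P i *\<^sub>v (c1 @\<^sub>v c2 @\<^sub>v c3)"
    using sl_split3[OF c'] unfolding c1_def c2_def c3_def by simp
  also have "\<dots> = mat_of_cols (n i) (b i) *\<^sub>v c1 + mat_of_cols (n i) (eta i) *\<^sub>v c2 + mat_of_cols (n i) (a i) *\<^sub>v c3"
    by (rule P_split) (auto simp: c1_def c2_def c3_def)
  also have "mat_of_cols (n i) (b i) *\<^sub>v c1 + mat_of_cols (n i) (eta i) *\<^sub>v c2 = mat_of_cols (n i) (b i @ eta i) *\<^sub>v (c1 @\<^sub>v c2)"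
    by (rule mc_append[symmetric]) (auto simp: c1_def c2_def)
  finally have Pc: "P i *\<^sub>v c = mat_of_cols (n i) (b i @ eta i) *\<^sub>v (c1 @\<^sub>v c2) + mat_of_cols (n i) (a i) *\<^sub>v c3" .
  have c12: "mat_of_cols (n i) (b i @ eta i) *\<^sub>v (c1 @\<^sub>v c2) \<in> cocyc n D d i"
    by (rule span_cocyc[of "b i @ eta i"]) (use b_cocyc[OF i'] eta_cocyc[OF i'] in \<open>auto simp: inspan_def c1_def c2_def\<close>)
  have "D i *\<^sub>v (P i *\<^sub>v c) = D i *\<^sub>v (mat_of_cols (n i) (b i @ eta i) *\<^sub>v (c1 @\<^sub>v c2)) + D i *\<^sub>v (mat_of_cols (n i) (a i) *\<^sub>v c3)"
    unfolding Pc by (rule mult_add_distrib_mat_vec[OF Dcar[OF i]]) auto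
  also have "D i *\<^sub>v (mat_of_cols (n i) (b i @ eta i) *\<^sub>v (c1 @\<^sub>v c2)) = 0\<^sub>v (n (Suc i))"
    using c12 i unfolding cocyc_iff by auto
  also have "D i *\<^sub>v (mat_of_cols (n i) (a i) *\<^sub>v c3) = mat_of_cols (n (Suc i)) (b (Suc i)) *\<^sub>v c3"
    using mat_vec_mc[OF Dcar[OF i] a_car[OF i'], of c3] by (simp add: dprev_def c3_def)
  finally show ?thesis unfolding c3_def by simp
qed

end


lemma len_b_le:
  assumes A: "dat n D d a eta" and B: "dat n D d a' eta'" and j: "j \<le> d"
  shows "length (dprev D a' j) \<le> length (dprev D a j)"
proof -
  have "\<forall>y\<in>set (dprev D a' j). inspan (n j) (dprev D a j) y"
  proof
    fix y assume y: "y \<in> set (dprev D a' j)"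
    have "inspan (n j) (dprev D a' j) y" by (rule inspan_elem[OF dat.b_car[OF B j] y])
    hence "y \<in> cobound n D j" by (rule dat.b_span_cobound[OF B j])
    then obtain u where "u \<in> carrier_vec (length (dprev D a j))" "y = mat_of_cols (n j) (dprev D a j) *\<^sub>v u"
      using dat.cobound_b[OF A j] by blast
    thus "inspan (n j) (dprev D a j) y" unfolding inspan_def by blast
  qed
  thus ?thesis by (rule factor_length[OF dat.b_indep[OF B j]])
qed

lemma len_be_le:
  assumes A: "dat n D d a eta" and B: "dat n D d a' eta'" and j: "j \<le> d"
  shows "length (dprev D a' j @ eta' j) \<le> length (dprev D a j @ eta j)"
proof -
  have "\<forall>y\<in>set (dprev D a' j @ eta' j). inspan (n j) (dprev D a j @ eta j) y"
  proof
    fix y assume y: "y \<in> set (dprev D a' j @ eta' j)"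
    have "y \<in> cocyc n D d j" using y dat.b_cocyc[OF B j] dat.eta_cocyc[OF B j] by auto
    then obtain u where "u \<in> carrier_vec (length (dprev D a j @ eta j))" "y = mat_of_cols (n j) (dprev D a j @ eta j) *\<^sub>v u"
      using dat.cocyc_beta[OF A j] by blast
    thus "inspan (n j) (dprev D a j @ eta j) y" unfolding inspan_def by blast
  qed
  thus ?thesis by (rule factor_length[OF dat.beta_indep[OF B j]])
qed

locale dat2 = A: dat n D d a eta + B: dat n D d a' eta'
  for n :: "nat \<Rightarrow> nat" and D :: "nat \<Rightarrow> 'a::field mat" and d :: nat and a eta a' eta'
begin

lemma lb: "j \<le> d \<Longrightarrow> length (B.b j) = length (A.b j)"
  using len_b_le[OF A.dat_axioms B.dat_axioms] len_b_le[OF B.dat_axioms A.dat_axioms] le_antisym by blast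

lemma leta: "j \<le> d \<Longrightarrow> length (eta' j) = length (eta j)"
  using len_be_le[OF A.dat_axioms B.dat_axioms, of j] len_be_le[OF B.dat_axioms A.dat_axioms, of j] lb[of j] by simp

lemma la: "j \<le> d \<Longrightarrow> length (a' j) = length (a j)"
  using A.len[of j] B.len[of j] lb[of j] leta[of j] by simp

abbreviation "L j \<equiv> B.b j @ eta' j @ a' j"

definition T :: "nat \<Rightarrow> 'a mat" where
  "T j = mat_of_cols (n j) (map (A.coord j) (L j))"

lemma T_car: "j \<le> d \<Longrightarrow> T j \<in> carrier_mat (n j) (n j)"
  unfolding T_def using B.all_len[of j] by (simp add: carrier_matI)

lemma BP: assumes j: "j \<le> d" shows "B.P j = A.P j * T j"
proof -
  have c: "set (map (A.coord j) (L j)) \<subseteq> carrier_vec (n j)"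
    using A.coord(1)[OF j] B.all_car[OF j] by auto
  have "map (\<lambda>c. A.P j *\<^sub>v c) (map (A.coord j) (L j)) = L j"
    unfolding map_map by (rule map_idI) (use A.coord(2)[OF j] B.all_car[OF j] in auto)
  hence "B.P j = mat_of_cols (n j) (map (\<lambda>c. A.P j *\<^sub>v c) (map (A.coord j) (L j)))"
    unfolding B.P_def by simp
  also have "\<dots> = A.P j * T j" unfolding T_def by (rule mc_map_mult[OF A.P_sq[OF j] c])
  finally show ?thesis .
qed

lemma detBP: "j \<le> d \<Longrightarrow> det (B.P j) = det (A.P j) * det (T j)"
  using BP det_mult[OF A.P_sq T_car] by simp

lemma T_entry: assumes "j \<le> d" "i < n j" "k < n j"
  shows "T j $$ (i, k) = A.coord j (L j ! k) $ i"
proof -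
  have kL: "k < length (L j)" using B.all_len[of j] assms by simp
  have "T j $$ (i,k) = map (A.coord j) (L j) ! k $ i" unfolding T_def
    by (rule mat_of_cols_index) (use assms(2) kL in simp_all)
  also have "map (A.coord j) (L j) ! k = A.coord j (L j ! k)" by (rule nth_map[OF kL])
  finally show ?thesis .
qed

lemma T_zero1: assumes j: "j \<le> d" and k: "k < length (A.b j)" and i: "length (A.b j) \<le> i" "i < n j"
  shows "T j $$ (i, k) = 0"
proof -
  have k': "k < length (B.b j)" using k lb[OF j] by simp
  have kn: "k < n j" using k' B.len[OF j] by simp
  have "L j ! k = B.b j ! k" using k' by (simp add: nth_append)
  moreover have "B.b j ! k \<in> cobound n D j"
    by (rule B.b_span_cobound[OF j inspan_elem[OF B.b_car[OF j]]]) (use k' in simp)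
  ultimately show ?thesis using T_entry[OF j i(2) kn] A.coord_cobound[OF j _ i] by simp
qed

lemma T_zero2: assumes j: "j \<le> d" and k: "k < length (A.b j) + length (eta j)"
  and i: "length (A.b j) + length (eta j) \<le> i" "i < n j"
  shows "T j $$ (i, k) = 0"
proof -
  have k': "k < length (B.b j @ eta' j)" using k lb[OF j] leta[OF j] by simp
  have kn: "k < n j" using k' B.len[OF j] by simp
  have "L j ! k = ((B.b j @ eta' j) @ a' j) ! k" by simp
  also have "\<dots> = (B.b j @ eta' j) ! k" by (rule nth_append_left[OF k'])
  finally have "L j ! k = (B.b j @ eta' j) ! k" .
  moreover have "(B.b j @ eta' j) ! k \<in> cocyc n D d j"
    using nth_mem[OF k'] B.b_cocyc[OF j] B.eta_cocyc[OF j] by auto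
  ultimately show ?thesis using T_entry[OF j i(2) kn] A.coord_cocyc[OF j _ i] by simp
qed

definition X :: "nat \<Rightarrow> 'a mat" where
  "X j = mat (length (A.b j)) (length (A.b j)) (\<lambda>(i,k). T j $$ (i,k))"
definition M :: "nat \<Rightarrow> 'a mat" where
  "M j = mat (length (eta j)) (length (eta j)) (\<lambda>(i,k). T j $$ (length (A.b j) + i, length (A.b j) + k))"
definition N :: "nat \<Rightarrow> 'a mat" where
  "N j = mat (length (a j)) (length (a j)) (\<lambda>(i,k). T j $$ (length (A.b j) + length (eta j) + i, length (A.b j) + length (eta j) + k))"

lemma detT: assumes j: "j \<le> d" shows "det (T j) = det (X j) * det (M j) * det (N j)"
proof -
  let ?b = "length (A.b j)" and ?h = "length (eta j)" and ?a = "length (a j)"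
  have nj: "n j = (?b + ?h) + ?a" using A.len[OF j] by simp
  have Tc: "T j \<in> carrier_mat ((?b + ?h) + ?a) ((?b + ?h) + ?a)" using T_car[OF j] nj by simp
  define U where "U = mat (?b + ?h) (?b + ?h) (\<lambda>(i,k). T j $$ (i,k))"
  have "det (T j) = det U * det (mat ?a ?a (\<lambda>(i,k). T j $$ (?b + ?h + i, ?b + ?h + k)))"
    unfolding U_def by (rule det_block_ut[OF Tc]) (use T_zero2[OF j] nj in auto)
  also have "mat ?a ?a (\<lambda>(i,k). T j $$ (?b + ?h + i, ?b + ?h + k)) = N j" unfolding N_def ..
  also have "det U = det (mat ?b ?b (\<lambda>(i,k). U $$ (i,k))) * det (mat ?h ?h (\<lambda>(i,k). U $$ (?b + i, ?b + k)))"
    by (rule det_block_ut) (use T_zero1[OF j] nj in \<open>auto simp: U_def\<close>)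
  also have "mat ?b ?b (\<lambda>(i,k). U $$ (i,k)) = X j"
    unfolding X_def U_def by (rule eq_matI) auto
  also have "mat ?h ?h (\<lambda>(i,k). U $$ (?b + i, ?b + k)) = M j"
    unfolding M_def U_def by (rule eq_matI) auto
  finally show ?thesis .
qed

lemma X0: "det (X 0) = 1"
  unfolding X_def by (simp add: dprev_def)

lemma Nd: "det (N d) = 1"
  unfolding N_def using A.a_d by simp

lemma XN: assumes i: "i < d" shows "X (Suc i) = N i"
proof (rule eq_matI)
  have i': "i \<le> d" and si: "Suc i \<le> d" using i by auto
  have bs: "length (A.b (Suc i)) = length (a i)" by (simp add: dprev_def)
  fix p k assume "p < dim_row (N i)" "k < dim_col (N i)"
  hence p: "p < length (a i)" and k: "k < length (a i)" unfolding N_def by auto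
  let ?b = "length (A.b i)" and ?h = "length (eta i)"
  have k': "k < length (a' i)" using k la[OF i'] by simp
  define c where "c = A.coord i (a' i ! k)"
  have aik: "a' i ! k \<in> carrier_vec (n i)" using B.a_car[OF i'] k' by auto
  have c: "c \<in> carrier_vec (n i)" "A.P i *\<^sub>v c = a' i ! k" using A.coord[OF i' aik] unfolding c_def by auto
  have "B.b (Suc i) ! k = D i *\<^sub>v (a' i ! k)" using k' by (simp add: dprev_def)
  also have "\<dots> = D i *\<^sub>v (A.P i *\<^sub>v c)" using c(2) by simp
  also have "\<dots> = mat_of_cols (n (Suc i)) (A.b (Suc i)) *\<^sub>v sl c (?b + ?h) (length (a i))"
    by (rule A.D_P[OF i c(1)])
  finally have e: "B.b (Suc i) ! k = mat_of_cols (n (Suc i)) (A.b (Suc i)) *\<^sub>v sl c (?b + ?h) (length (a i))" .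
  have co: "A.coord (Suc i) (B.b (Suc i) ! k) = sl c (?b + ?h) (length (a i)) @\<^sub>v 0\<^sub>v (length (eta (Suc i))) @\<^sub>v 0\<^sub>v (length (a (Suc i)))"
    by (rule A.coord_split[OF si]) (auto simp: e bs mc_zero)
  have kb: "k < length (B.b (Suc i))" using k' by (simp add: dprev_def)
  have nS: "length (a i) \<le> n (Suc i)" using A.len[OF si] bs by simp
  have "X (Suc i) $$ (p, k) = T (Suc i) $$ (p, k)" unfolding X_def using p k bs by simp
  also have "\<dots> = A.coord (Suc i) (L (Suc i) ! k) $ p" using T_entry[OF si] p k nS by simp
  also have "L (Suc i) ! k = B.b (Suc i) ! k" using kb by (simp add: nth_append)
  also have "A.coord (Suc i) (B.b (Suc i) ! k) $ p = sl c (?b + ?h) (length (a i)) $ p"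
    unfolding co by (rule app3_lo[OF _ zero_carrier_vec zero_carrier_vec]) (use p in auto)
  also have "\<dots> = c $ (?b + ?h + p)" using p by (simp add: sl_def)
  also have "c = A.coord i (L i ! (?b + ?h + k))"
    unfolding c_def using lb[OF i'] leta[OF i'] k' by (simp add: nth_append)
  also have "A.coord i (L i ! (?b + ?h + k)) $ (?b + ?h + p) = T i $$ (?b + ?h + p, ?b + ?h + k)"
    using T_entry[OF i', of "?b + ?h + p" "?b + ?h + k"] A.len[OF i'] p k by simp
  also have "\<dots> = N i $$ (p, k)" unfolding N_def using p k by simp
  finally show "X (Suc i) $$ (p, k) = N i $$ (p, k)" .
next
  show "dim_row (X (Suc i)) = dim_row (N i)" "dim_col (X (Suc i)) = dim_col (N i)"
    unfolding X_def N_def by (simp_all add: dprev_def)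
qed

end


lemma prod_alg:
  fixes c p x m y :: "nat \<Rightarrow> 'a::field"
  assumes mnz: "\<And>j. j \<le> d \<Longrightarrow> m j \<noteq> 0"
    and tel: "(\<Prod>j\<le>d. alt_pow j (x j * y j)) = 1"
  shows "(\<Prod>j\<le>d. alt_pow j (c j / p j)) =
    (\<Prod>j\<le>d. alt_pow j (c j / (p j * (x j * m j * y j)))) * (\<Prod>j\<le>d. alt_pow j (m j))"
proof -
  have "(\<Prod>j\<le>d. alt_pow j (c j / (p j * (x j * m j * y j)))) * (\<Prod>j\<le>d. alt_pow j (m j))
      = (\<Prod>j\<le>d. alt_pow j (c j / (p j * (x j * m j * y j))) * alt_pow j (m j))"
    by (rule prod.distrib[symmetric])
  also have "\<dots> = (\<Prod>j\<le>d. alt_pow j (c j / p j) / alt_pow j (x j * y j))"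
  proof (rule prod.cong[OF refl])
    fix j assume "j \<in> {..d}"
    hence m: "m j \<noteq> 0" using mnz by simp
    have "alt_pow j (c j / (p j * (x j * m j * y j))) * alt_pow j (m j)
        = alt_pow j (c j / (p j * (x j * m j * y j)) * m j)" by (rule alt_pow_mult[symmetric])
    also have "c j / (p j * (x j * m j * y j)) * m j = (c j / p j) / (x j * y j)"
      using m by (simp add: divide_inverse inverse_mult_distrib)
    also have "alt_pow j ((c j / p j) / (x j * y j)) = alt_pow j (c j / p j) / alt_pow j (x j * y j)"
      by (rule alt_pow_div)
    finally show "alt_pow j (c j / (p j * (x j * m j * y j))) * alt_pow j (m j) = alt_pow j (c j / p j) / alt_pow j (x j * y j)" .
  qed
  also have "\<dots> = (\<Prod>j\<le>d. alt_pow j (c j / p j)) / (\<Prod>j\<le>d. alt_pow j (x j * y j))"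
    by (rule prod_dividef)
  also have "\<dots> = (\<Prod>j\<le>d. alt_pow j (c j / p j))" using tel by simp
  finally show ?thesis by simp
qed

context dat2
begin

definition Mh :: "nat \<Rightarrow> 'a mat" where
  "Mh j = mat (length (eta j)) (length (eta j)) (\<lambda>(i,k). T j $$ (length (A.b j) + k, length (A.b j) + i))"

lemma Mh_car: "Mh j \<in> carrier_mat (length (eta j)) (length (eta j))" unfolding Mh_def by simp

lemma Mh_det: "det (Mh j) = det (M j)"
proof -
  have "Mh j = transpose_mat (M j)" unfolding Mh_def M_def by (rule eq_matI) auto
  thus ?thesis using det_transpose[of "M j" "length (eta j)"] by (simp add: M_def)
qed

lemma Mh_row: assumes j: "j \<le> d" and i: "i < length (eta j)"
  shows "eta' j ! i - mat_of_cols (n j) (eta j) *\<^sub>v row (Mh j) i \<in> cobound n D j"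
proof -
  let ?b = "length (A.b j)" and ?h = "length (eta j)" and ?a = "length (a j)"
  have i': "i < length (eta' j)" using i leta[OF j] by simp
  have ec: "eta' j ! i \<in> cocyc n D d j" using B.eta_cocyc[OF j] nth_mem[OF i'] by auto
  have ecar: "eta' j ! i \<in> carrier_vec (n j)" using ec A.cocyc_carrier by auto
  define c where "c = A.coord j (eta' j ! i)"
  have c: "c \<in> carrier_vec (n j)" "A.P j *\<^sub>v c = eta' j ! i" using A.coord[OF j ecar] unfolding c_def by auto
  have nj: "n j = ?b + ?h + ?a" using A.len[OF j] by simp
  have Lbi: "L j ! (?b + i) = eta' j ! i"
    using lb[OF j] i' by (simp add: nth_append)
  have row: "row (Mh j) i = sl c ?b ?h"
  proof (rule eq_vecI)
    fix k assume "k < dim_vec (sl c ?b ?h)"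
    hence k: "k < ?h" by (simp add: sl_def)
    have "row (Mh j) i $ k = T j $$ (?b + k, ?b + i)" using i k unfolding Mh_def by simp
    also have "\<dots> = A.coord j (L j ! (?b + i)) $ (?b + k)" by (rule T_entry[OF j]) (use nj i k in auto)
    also have "\<dots> = sl c ?b ?h $ k" using Lbi k by (simp add: c_def sl_def)
    finally show "row (Mh j) i $ k = sl c ?b ?h $ k" .
  qed (simp add: Mh_def sl_def)
  have z: "sl c (?b + ?h) ?a = 0\<^sub>v ?a"
  proof (rule eq_vecI)
    fix k assume "k < dim_vec (0\<^sub>v ?a :: 'a vec)"
    hence k: "k < ?a" by simp
    have "c $ (?b + ?h + k) = 0" unfolding c_def by (rule A.coord_cocyc[OF j ec]) (use nj k in auto)
    thus "sl c (?b + ?h) ?a $ k = 0\<^sub>v ?a $ k" using k by (simp add: sl_def)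
  qed (simp add: sl_def)
  have c3: "c \<in> carrier_vec (?b + ?h + ?a)" using c(1) nj by simp
  have "eta' j ! i = A.P j *\<^sub>v (sl c 0 ?b @\<^sub>v sl c ?b ?h @\<^sub>v sl c (?b + ?h) ?a)"
    using c(2) sl_split3[OF c3] by simp
  also have "\<dots> = mat_of_cols (n j) (A.b j) *\<^sub>v sl c 0 ?b + mat_of_cols (n j) (eta j) *\<^sub>v sl c ?b ?h
      + mat_of_cols (n j) (a j) *\<^sub>v sl c (?b + ?h) ?a"
    by (rule A.P_split) auto
  also have "mat_of_cols (n j) (a j) *\<^sub>v sl c (?b + ?h) ?a = 0\<^sub>v (n j)" unfolding z by (rule mc_zero)
  finally have e: "eta' j ! i = mat_of_cols (n j) (A.b j) *\<^sub>v sl c 0 ?b + mat_of_cols (n j) (eta j) *\<^sub>v sl c ?b ?h + 0\<^sub>v (n j)" .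
  have "eta' j ! i - mat_of_cols (n j) (eta j) *\<^sub>v row (Mh j) i = mat_of_cols (n j) (A.b j) *\<^sub>v sl c 0 ?b"
    unfolding row e by (intro eq_vecI) auto
  moreover have "mat_of_cols (n j) (A.b j) *\<^sub>v sl c 0 ?b \<in> cobound n D j"
    by (rule A.b_in_cobound[OF j]) simp
  ultimately show ?thesis by simp
qed

lemma detT_nz: "j \<le> d \<Longrightarrow> det (T j) \<noteq> 0"
  using detBP[of j] B.det_nz[of j] unfolding B.P_def by auto

lemma compare:
  assumes dr: "d = 2 * r - 1"
  shows "detH_eq n D d (rho_rep n D Gam r (a, eta)) (rho_rep n D Gam r (a', eta'))"
proof -
  let ?c = "\<lambda>j. det (c_mat n Gam r j)"
  have Nexp: "N_exp a' d = N_exp a d"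
    unfolding N_exp_def using la by (intro arg_cong[where f = "\<lambda>x. x div 2"] sum.cong) auto
  have dPB: "det (phi_mat n D a' eta' j) = det (phi_mat n D a eta j) * (det (X j) * det (M j) * det (N j))"
    if "j \<le> d" for j
    using detBP[OF that] detT[OF that] by (simp add: B.P_phi A.P_phi)
  have mnz: "det (Mh j) \<noteq> 0" if "j \<le> d" for j
    using detT_nz[OF that] detT[OF that] Mh_det by auto
  have ynz: "det (N i) \<noteq> 0" if "i \<le> d" for i
    using detT_nz[OF that] detT[OF that] by auto
  have tel: "(\<Prod>j\<le>d. alt_pow j (det (X j) * det (N j))) = 1"
    by (rule telescope[where x="\<lambda>j. det (X j)" and y="\<lambda>j. det (N j)" and d=d]) (auto simp: X0 Nd XN ynz)
  have sc: "(\<Prod>j\<le>d. alt_pow j (?c j / det (phi_mat n D a eta j))) =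
    (\<Prod>j\<le>d. alt_pow j (?c j / det (phi_mat n D a' eta' j))) * (\<Prod>j\<le>d. alt_pow j (det (Mh j)))"
  proof -
    have "(\<Prod>j\<le>d. alt_pow j (?c j / det (phi_mat n D a eta j))) =
      (\<Prod>j\<le>d. alt_pow j (?c j / (det (phi_mat n D a eta j) * (det (X j) * det (Mh j) * det (N j))))) * (\<Prod>j\<le>d. alt_pow j (det (Mh j)))"
      by (rule prod_alg[OF mnz tel])
    also have "(\<Prod>j\<le>d. alt_pow j (?c j / (det (phi_mat n D a eta j) * (det (X j) * det (Mh j) * det (N j)))))
      = (\<Prod>j\<le>d. alt_pow j (?c j / det (phi_mat n D a' eta' j)))"
      by (rule prod.cong[OF refl]) (simp add: dPB Mh_det)
    finally show ?thesis .
  qed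
  show ?thesis
    unfolding detH_eq_def
  proof (intro conjI)
    show "detH_rep n D d (rho_rep n D Gam r (a, eta))"
      unfolding detH_rep_def rho_rep_def Let_def using A.cohom by simp
    show "detH_rep n D d (rho_rep n D Gam r (a', eta'))"
      unfolding detH_rep_def rho_rep_def Let_def using B.cohom by simp
    show "\<exists>M. (\<forall>j\<le>d. M j \<in> carrier_mat (length (snd (rho_rep n D Gam r (a, eta)) j)) (length (snd (rho_rep n D Gam r (a, eta)) j)) \<and>
             length (snd (rho_rep n D Gam r (a', eta')) j) = length (snd (rho_rep n D Gam r (a, eta)) j) \<and>
             (\<forall>i<length (snd (rho_rep n D Gam r (a, eta)) j).
                 snd (rho_rep n D Gam r (a', eta')) j ! i - mat_of_cols (n j) (snd (rho_rep n D Gam r (a, eta)) j) *\<^sub>v row (M j) i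
                 \<in> cobound n D j)) \<and>
         fst (rho_rep n D Gam r (a, eta)) = fst (rho_rep n D Gam r (a', eta')) * (\<Prod>j\<le>d. alt_pow j (det (M j)))"
    proof (intro exI[of _ Mh] conjI allI impI)
      fix j assume j: "j \<le> d"
      show "Mh j \<in> carrier_mat (length (snd (rho_rep n D Gam r (a, eta)) j)) (length (snd (rho_rep n D Gam r (a, eta)) j))"
        unfolding rho_rep_def Let_def using Mh_car by simp
      show "length (snd (rho_rep n D Gam r (a', eta')) j) = length (snd (rho_rep n D Gam r (a, eta)) j)"
        unfolding rho_rep_def Let_def using leta[OF j] by simp
      fix i assume "i < length (snd (rho_rep n D Gam r (a, eta)) j)"
      hence i: "i < length (eta j)" unfolding rho_rep_def Let_def by simp
      show "snd (rho_rep n D Gam r (a', eta')) j ! i - mat_of_cols (n j) (snd (rho_rep n D Gam r (a, eta)) j) *\<^sub>v row (Mh j) i \<in> cobound n D j"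
        unfolding rho_rep_def Let_def using Mh_row[OF j i] by simp
    next
      show "fst (rho_rep n D Gam r (a, eta)) = fst (rho_rep n D Gam r (a', eta')) * (\<Prod>j\<le>d. alt_pow j (det (Mh j)))"
        unfolding rho_rep_def Let_def dr[symmetric] using sc Nexp by (simp add: mult.assoc)
    qed
  qed
qed

end


context cx
begin

definition etaf :: "nat \<Rightarrow> 'a vec list \<Rightarrow> 'a vec list" where
  "etaf j L = (SOME eta. set eta \<subseteq> cocyc n D d j \<and> indep (n j) (L @ eta) \<and> (\<forall>x \<in> cocyc n D d j. inspan (n j) (L @ eta) x))"

definition af :: "nat \<Rightarrow> 'a vec list \<Rightarrow> 'a vec list" where
  "af j L = (if d \<le> j then [] else (SOME a. set a \<subseteq> carrier_vec (n j) \<and> indep (n j) (L @ etaf j L @ a) \<and>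
      (\<forall>x \<in> carrier_vec (n j). inspan (n j) (L @ etaf j L @ a) x)))"

primrec Af :: "nat \<Rightarrow> 'a vec list" where
  "Af 0 = af 0 []"
| "Af (Suc j) = af (Suc j) (map (\<lambda>v. D j *\<^sub>v v) (Af j))"

lemma Af_eq: "Af j = af j (dprev D Af j)"
  by (cases j) (auto simp: dprev_def)

definition Ef :: "nat \<Rightarrow> 'a vec list" where "Ef j = etaf j (dprev D Af j)"

lemma etaf_spec: assumes "set L \<subseteq> cocyc n D d j" "indep (n j) L"
  shows "set (etaf j L) \<subseteq> cocyc n D d j \<and> indep (n j) (L @ etaf j L) \<and> (\<forall>x \<in> cocyc n D d j. inspan (n j) (L @ etaf j L) x)"
proof -
  have "\<exists>eta. set eta \<subseteq> cocyc n D d j \<and> indep (n j) (L @ eta) \<and> (\<forall>x \<in> cocyc n D d j. inspan (n j) (L @ eta) x)"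
    by (rule extend_indep[OF cocyc_carrier assms(2)])
  thus ?thesis unfolding etaf_def by (rule someI_ex)
qed

lemma af_spec: assumes "j < d" "indep (n j) (L @ etaf j L)"
  shows "set (af j L) \<subseteq> carrier_vec (n j) \<and> indep (n j) (L @ etaf j L @ af j L) \<and>
      (\<forall>x \<in> carrier_vec (n j). inspan (n j) (L @ etaf j L @ af j L) x)"
proof -
  have "\<exists>a. set a \<subseteq> carrier_vec (n j) \<and> indep (n j) ((L @ etaf j L) @ a) \<and> (\<forall>x \<in> carrier_vec (n j). inspan (n j) ((L @ etaf j L) @ a) x)"
    by (rule extend_indep[OF subset_refl assms(2)])
  hence "\<exists>a. set a \<subseteq> carrier_vec (n j) \<and> indep (n j) (L @ etaf j L @ a) \<and> (\<forall>x \<in> carrier_vec (n j). inspan (n j) (L @ etaf j L @ a) x)"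
    by simp
  hence "(\<lambda>a. set a \<subseteq> carrier_vec (n j) \<and> indep (n j) (L @ etaf j L @ a) \<and> (\<forall>x \<in> carrier_vec (n j). inspan (n j) (L @ etaf j L @ a) x))
     (SOME a. set a \<subseteq> carrier_vec (n j) \<and> indep (n j) (L @ etaf j L @ a) \<and> (\<forall>x \<in> carrier_vec (n j). inspan (n j) (L @ etaf j L @ a) x))"
    by (rule someI_ex)
  thus ?thesis unfolding af_def using assms(1) by simp
qed

lemma cocyc_d: "cocyc n D d d = carrier_vec (n d)"
  unfolding cocyc_def by auto

definition good :: "nat \<Rightarrow> bool" where
  "good j \<longleftrightarrow> set (dprev D Af j) \<subseteq> cocyc n D d j \<and> indep (n j) (dprev D Af j)"

lemma good_props: assumes j: "j \<le> d" and g: "good j"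
  shows "set (Af j) \<subseteq> carrier_vec (n j)" "set (Ef j) \<subseteq> cocyc n D d j"
    "indep (n j) (dprev D Af j @ Ef j @ Af j)"
    "\<forall>x \<in> carrier_vec (n j). inspan (n j) (dprev D Af j @ Ef j @ Af j) x"
proof -
  let ?L = "dprev D Af j"
  have e: "set (Ef j) \<subseteq> cocyc n D d j \<and> indep (n j) (?L @ Ef j) \<and> (\<forall>x \<in> cocyc n D d j. inspan (n j) (?L @ Ef j) x)"
    unfolding Ef_def by (rule etaf_spec) (use g in \<open>auto simp: good_def\<close>)
  show "set (Ef j) \<subseteq> cocyc n D d j" using e by simp
  have "set (Af j) \<subseteq> carrier_vec (n j) \<and> indep (n j) (?L @ Ef j @ Af j) \<and>
      (\<forall>x \<in> carrier_vec (n j). inspan (n j) (?L @ Ef j @ Af j) x)"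
  proof (cases "j < d")
    case True
    thus ?thesis using af_spec[OF True, of ?L] e unfolding Ef_def by (simp add: Af_eq[symmetric])
  next
    case False
    hence jd: "j = d" using j by simp
    have "Af j = []" using jd Af_eq[of j] by (simp add: af_def)
    thus ?thesis using e jd cocyc_d by simp
  qed
  thus "set (Af j) \<subseteq> carrier_vec (n j)" "indep (n j) (?L @ Ef j @ Af j)"
    "\<forall>x \<in> carrier_vec (n j). inspan (n j) (?L @ Ef j @ Af j) x" by auto
qed

lemma good_Suc: assumes j: "j < d" and g: "good j" shows "good (Suc j)"
proof -
  have j': "j \<le> d" using j by simp
  note gp = good_props[OF j' g]
  let ?L = "dprev D Af j"
  have Lc: "set ?L \<subseteq> carrier_vec (n j)" using g cocyc_carrier unfolding good_def by blast
  have Ec: "set (Ef j) \<subseteq> carrier_vec (n j)" using gp(2) cocyc_carrier by blast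
  have ds: "dprev D Af (Suc j) = map (\<lambda>v. D j *\<^sub>v v) (Af j)" by (simp add: dprev_def)
  have sub: "set (dprev D Af (Suc j)) \<subseteq> cocyc n D d (Suc j)"
  proof
    fix x assume "x \<in> set (dprev D Af (Suc j))"
    then obtain v where v: "v \<in> set (Af j)" "x = D j *\<^sub>v v" using ds by auto
    have "x \<in> cobound n D (Suc j)" unfolding cobound_def using v gp(1) by auto
    thus "x \<in> cocyc n D d (Suc j)" using cobound_sub_cocyc[of "Suc j"] j by auto
  qed
  have ind: "indep (n (Suc j)) (dprev D Af (Suc j))"
    unfolding indep_def
  proof (intro ballI impI)
    fix c assume c: "c \<in> carrier_vec (length (dprev D Af (Suc j)))"
      and z: "mat_of_cols (n (Suc j)) (dprev D Af (Suc j)) *\<^sub>v c = 0\<^sub>v (n (Suc j))"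
    have c': "c \<in> carrier_vec (length (Af j))" using c ds by simp
    have "D j *\<^sub>v (mat_of_cols (n j) (Af j) *\<^sub>v c) = 0\<^sub>v (n (Suc j))"
      using z ds mat_vec_mc[OF Dcar[OF j] gp(1) c'] by simp
    hence "mat_of_cols (n j) (Af j) *\<^sub>v c \<in> cocyc n D d j" unfolding cocyc_iff by simp
    hence "inspan (n j) (?L @ Ef j) (mat_of_cols (n j) (Af j) *\<^sub>v c)"
      using etaf_spec[of ?L j] g unfolding good_def Ef_def by auto
    then obtain c' where c'': "c' \<in> carrier_vec (length (?L @ Ef j))"
      "mat_of_cols (n j) (Af j) *\<^sub>v c = mat_of_cols (n j) (?L @ Ef j) *\<^sub>v c'"
      unfolding inspan_def by auto
    have z1: "0\<^sub>v (length (Af j)) \<in> carrier_vec (length (Af j))" by simp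
    have z2: "0\<^sub>v (length (?L @ Ef j)) \<in> carrier_vec (length (?L @ Ef j))" by simp
    have "mat_of_cols (n j) ((?L @ Ef j) @ Af j) *\<^sub>v (c' @\<^sub>v 0\<^sub>v (length (Af j)))
      = mat_of_cols (n j) (?L @ Ef j) *\<^sub>v c' + mat_of_cols (n j) (Af j) *\<^sub>v 0\<^sub>v (length (Af j))"
      by (rule mc_append[OF c''(1) z1])
    also have "\<dots> = mat_of_cols (n j) (Af j) *\<^sub>v c" using c'' by (simp add: mc_zero)
    also have "\<dots> = mat_of_cols (n j) (?L @ Ef j) *\<^sub>v 0\<^sub>v (length (?L @ Ef j)) + mat_of_cols (n j) (Af j) *\<^sub>v c"
      unfolding mc_zero by simp
    also have "\<dots> = mat_of_cols (n j) ((?L @ Ef j) @ Af j) *\<^sub>v (0\<^sub>v (length (?L @ Ef j)) @\<^sub>v c)"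
      by (rule mc_append[OF z2 c', symmetric])
    finally have calc: "mat_of_cols (n j) ((?L @ Ef j) @ Af j) *\<^sub>v (c' @\<^sub>v 0\<^sub>v (length (Af j)))
       = mat_of_cols (n j) ((?L @ Ef j) @ Af j) *\<^sub>v (0\<^sub>v (length (?L @ Ef j)) @\<^sub>v c)" .
    have ca: "c' @\<^sub>v 0\<^sub>v (length (Af j)) \<in> carrier_vec (length ((?L @ Ef j) @ Af j))"
      using append_carrier_vec[OF c''(1) z1] by (simp add: add.assoc)
    have cb: "0\<^sub>v (length (?L @ Ef j)) @\<^sub>v c \<in> carrier_vec (length ((?L @ Ef j) @ Af j))"
      using append_carrier_vec[OF z2 c'] by (simp add: add.assoc)
    have ind': "indep (n j) ((?L @ Ef j) @ Af j)" using gp(3) by simp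
    have "c' @\<^sub>v 0\<^sub>v (length (Af j)) = 0\<^sub>v (length (?L @ Ef j)) @\<^sub>v c"
      by (rule indep_unique[OF ind' ca cb calc])
    hence "c = 0\<^sub>v (length (Af j))" using append_vec_eq[OF c''(1) z2] by simp
    thus "c = 0\<^sub>v (length (dprev D Af (Suc j)))" using ds by simp
  qed
  show ?thesis unfolding good_def using sub ind by simp
qed

lemma good_all: "j \<le> d \<Longrightarrow> good j"
proof (induction j)
  case 0 thus ?case unfolding good_def indep_def by (auto simp: dprev_def)
next
  case (Suc j) thus ?case using good_Suc by simp
qed

lemma exists_datum: "\<exists>ae. phi_datum n D d ae"
proof (intro exI[of _ "(Af, Ef)"])
  show "phi_datum n D d (Af, Ef)"
    unfolding phi_datum_def fst_conv snd_conv
  proof (intro conjI allI impI)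
    fix j assume j: "j \<le> d"
    note gp = good_props[OF j good_all[OF j]]
    have Lc: "set (dprev D Af j) \<subseteq> carrier_vec (n j)" using good_all[OF j] cocyc_carrier unfolding good_def by blast
    have ln: "length (dprev D Af j @ Ef j @ Af j) = n j" by (rule indep_span_len[OF gp(3,4)])
    show "set (Af j) \<subseteq> carrier_vec (n j)" by (rule gp(1))
    show "set (Ef j) \<subseteq> cocyc n D d j" by (rule gp(2))
    show "length (dprev D Af j) + length (Ef j) + length (Af j) = n j" using ln by simp
    show "det (phi_mat n D Af Ef j) \<noteq> 0" unfolding phi_mat_def by (rule indep_det[OF ln gp(3)])
  next
    show "Af d = []" using Af_eq[of d] by (simp add: af_def)
  qed
qed

end


lemma sum_b_shift:
  fixes bx x :: "nat \<Rightarrow> nat"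
  assumes "bx 0 = 0" "\<And>j. bx (Suc j) = x j"
  shows "(\<Sum>k\<le>d. bx k) = (\<Sum>k<d. x k)"
  using assms by (induction d) auto

lemma par_a:
  fixes x y h g bx bw :: "nat \<Rightarrow> nat"
  assumes bx0: "bx 0 = 0" and bxS: "\<And>j. bx (Suc j) = x j"
    and by0: "bw 0 = 0" and byS: "\<And>j. bw (Suc j) = y j"
  shows "even ((\<Sum>j\<le>d. \<Sum>k<j. (bx j + h j + x j) * (bw k + g k + y k)) + (\<Sum>j\<le>d. \<Sum>k<j. h j * g k)
     + (\<Sum>j\<le>d. x j * y j) + (\<Sum>j\<le>d. bw j * (h j + x j) + g j * x j)
     + x d * (\<Sum>k\<le>d. bw k + g k + y k))"
proof (induction d)
  case 0
  show ?case by (rule dvdI[of _ _ "x 0 * y 0 + g 0 * x 0"]) (simp add: algebra_simps by0)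
next
  case (Suc d)
  define nn where "nn j = bx j + h j + x j" for j
  define mm where "mm j = bw j + g j + y j" for j
  define M where "M = (\<Sum>k\<le>d. mm k)"
  define G where "G = (\<Sum>k\<le>d. g k)"
  define Y where "Y = (\<Sum>k<d. y k)"
  define S1 where "S1 = (\<Sum>j\<le>d. \<Sum>k<j. nn j * mm k)"
  define Hg where "Hg = (\<Sum>j\<le>d. \<Sum>k<j. h j * g k)"
  define XY where "XY = (\<Sum>j\<le>d. x j * y j)"
  define Sb where "Sb = (\<Sum>j\<le>d. bw j * (h j + x j) + g j * x j)"
  have IH: "even (S1 + Hg + XY + Sb + x d * M)"
    using Suc.IH unfolding S1_def Hg_def XY_def Sb_def M_def nn_def mm_def .
  have MY: "M = G + y d + 2 * Y"
  proof -
    have "M = (\<Sum>k\<le>d. bw k) + G + (\<Sum>k\<le>d. y k)" unfolding M_def mm_def G_def by (simp add: sum.distrib)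
    also have "(\<Sum>k\<le>d. bw k) = Y" unfolding Y_def by (rule sum_b_shift[OF by0 byS])
    also have "(\<Sum>k\<le>d. y k) = Y + y d" unfolding Y_def by (simp add: lessThan_Suc_atMost[symmetric])
    finally show ?thesis by simp
  qed
  have nS: "nn (Suc d) = x d + h (Suc d) + x (Suc d)" unfolding nn_def using bxS by simp
  have mS: "mm (Suc d) = y d + g (Suc d) + y (Suc d)" unfolding mm_def using byS by simp
  have sumlt: "(\<Sum>k<Suc d. f k) = (\<Sum>k\<le>d. f k)" for f :: "nat \<Rightarrow> nat"
    by (simp add: lessThan_Suc_atMost)
  have E1: "(\<Sum>j\<le>Suc d. \<Sum>k<j. nn j * mm k) = S1 + nn (Suc d) * M"
    unfolding S1_def M_def sum.atMost_Suc lessThan_Suc_atMost sum_distrib_left ..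
  have E2: "(\<Sum>j\<le>Suc d. \<Sum>k<j. h j * g k) = Hg + h (Suc d) * G"
    unfolding Hg_def G_def sum.atMost_Suc lessThan_Suc_atMost sum_distrib_left ..
  have E3: "(\<Sum>j\<le>Suc d. x j * y j) = XY + x (Suc d) * y (Suc d)" unfolding XY_def by simp
  have E4: "(\<Sum>j\<le>Suc d. bw j * (h j + x j) + g j * x j) = Sb + (y d * (h (Suc d) + x (Suc d)) + g (Suc d) * x (Suc d))"
    unfolding Sb_def using byS by simp
  have E5: "(\<Sum>k\<le>Suc d. mm k) = M + mm (Suc d)" unfolding M_def by simp
  let ?T = "(\<Sum>j\<le>Suc d. \<Sum>k<j. nn j * mm k) + (\<Sum>j\<le>Suc d. \<Sum>k<j. h j * g k)
     + (\<Sum>j\<le>Suc d. x j * y j) + (\<Sum>j\<le>Suc d. bw j * (h j + x j) + g j * x j)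
     + x (Suc d) * (\<Sum>k\<le>Suc d. mm k)"
  have key: "?T + 2 * (x d * M) = (S1 + Hg + XY + Sb + x d * M) + 2 * (x d * M + x (Suc d) * M + x (Suc d) * y (Suc d)
      + y d * x (Suc d) + g (Suc d) * x (Suc d) + h (Suc d) * G + h (Suc d) * y d + h (Suc d) * Y)"
    unfolding E1 E2 E3 E4 E5 nS mS MY by (simp add: algebra_simps)
  have "even (?T + 2 * (x d * M))" unfolding key by (rule dvd_add[OF IH dvd_triv_left])
  hence "even ?T" by (simp only: dvd_add_left_iff[OF dvd_triv_left])
  thus ?case unfolding nn_def mm_def .
qed


lemma sum_split_add2:
  "(\<Sum>j<a+b. f j) = (\<Sum>j<a. f j) + (\<Sum>j<b. f (a+j))" for f :: "nat \<Rightarrow> 'b::comm_monoid_add"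
  by (induction b) (auto simp: add.assoc)

lemma prodsum:
  fixes f g :: "nat \<Rightarrow> nat"
  shows "(\<Sum>j<N. f j) * (\<Sum>j<N. g j) = (\<Sum>j<N. f j * g j) + (\<Sum>j<N. \<Sum>k<j. f j * g k) + (\<Sum>j<N. \<Sum>k<j. f k * g j)"
proof (induction N)
  case 0 thus ?case by simp
next
  case (Suc N)
  have "(\<Sum>j<Suc N. f j) * (\<Sum>j<Suc N. g j) = ((\<Sum>j<N. f j) + f N) * ((\<Sum>j<N. g j) + g N)" by simp
  also have "\<dots> = (\<Sum>j<N. f j) * (\<Sum>j<N. g j) + f N * (\<Sum>j<N. g j) + (\<Sum>j<N. f j) * g N + f N * g N"
    by (simp add: algebra_simps)
  also have "\<dots> = (\<Sum>j<Suc N. f j * g j) + (\<Sum>j<Suc N. \<Sum>k<j. f j * g k) + (\<Sum>j<Suc N. \<Sum>k<j. f k * g j)"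
    unfolding Suc.IH by (simp add: sum_distrib_left sum_distrib_right algebra_simps)
  finally show ?case .
qed

lemma refl_double:
  fixes f :: "nat \<Rightarrow> nat"
  assumes sym: "\<And>j. j < 2 * r \<Longrightarrow> f (2 * r - 1 - j) = f j"
  shows "(\<Sum>j<2 * r. f j) = 2 * (\<Sum>j<r. f j)"
proof -
  have "(\<Sum>j<2 * r. f j) = (\<Sum>j<r + r. f j)" by (simp add: mult_2)
  also have "\<dots> = (\<Sum>j<r. f j) + (\<Sum>j<r. f (r + j))" by (rule sum_split_add2)
  also have "(\<Sum>j<r. f (r + j)) = (\<Sum>j<r. f (r - Suc j))"
  proof (rule sum.cong[OF refl])
    fix j assume "j \<in> {..<r}"
    hence j: "j < r" by simp
    have "f (2 * r - 1 - (r + j)) = f (r + j)" using sym[of "r + j"] j by simp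
    moreover have "2 * r - 1 - (r + j) = r - Suc j" using j by simp
    ultimately show "f (r + j) = f (r - Suc j)" by simp
  qed
  also have "\<dots> = (\<Sum>j<r. f j)" by (rule sum.nat_diff_reindex)
  finally show ?thesis by simp
qed

lemma S1_S2:
  fixes f g :: "nat \<Rightarrow> nat"
  assumes sf: "\<And>j. j < N \<Longrightarrow> f (N - 1 - j) = f j" and sg: "\<And>j. j < N \<Longrightarrow> g (N - 1 - j) = g j"
  shows "(\<Sum>j<N. \<Sum>k<j. f j * g k) = (\<Sum>j<N. \<Sum>k<j. f k * g j)"
proof -
  define P where "P = Sigma {..<N} (\<lambda>j. {..<j})"
  have fin: "finite P" unfolding P_def by auto
  have e1: "(\<Sum>j<N. \<Sum>k<j. f j * g k) = (\<Sum>p\<in>P. f (fst p) * g (snd p))"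
    unfolding P_def by (subst sum.Sigma) (auto simp: case_prod_beta)
  have e2: "(\<Sum>j<N. \<Sum>k<j. f k * g j) = (\<Sum>p\<in>P. f (snd p) * g (fst p))"
    unfolding P_def by (subst sum.Sigma) (auto simp: case_prod_beta)
  define s where "s = (\<lambda>p::nat \<times> nat. (N - 1 - snd p, N - 1 - fst p))"
  have "(\<Sum>p\<in>P. f (fst p) * g (snd p)) = (\<Sum>p\<in>P. f (snd p) * g (fst p))"
  proof (rule sum.reindex_bij_witness[where i = s and j = s])
    fix p assume "p \<in> P" thus "s (s p) = p" unfolding P_def s_def by (cases p) auto
  next
    fix p assume "p \<in> P" thus "s p \<in> P" unfolding P_def s_def by (cases p) auto
  next
    fix p assume "p \<in> P" thus "s (s p) = p" unfolding P_def s_def by (cases p) auto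
  next
    fix p assume "p \<in> P" thus "s p \<in> P" unfolding P_def s_def by (cases p) auto
  next
    fix p assume p: "p \<in> P"
    obtain j k where jk: "p = (j, k)" by (cases p)
    have "k < j" "j < N" using p jk unfolding P_def by auto
    thus "f (snd (s p)) * g (fst (s p)) = f (fst p) * g (snd p)"
      unfolding s_def jk using sf[of j] sg[of k] by simp
  qed
  thus ?thesis using e1 e2 by simp
qed

lemma par_c:
  fixes f g :: "nat \<Rightarrow> nat"
  assumes sf: "\<And>j. j < 2 * r \<Longrightarrow> f (2 * r - 1 - j) = f j" and sg: "\<And>j. j < 2 * r \<Longrightarrow> g (2 * r - 1 - j) = g j"
  shows "even ((\<Sum>j<r. f j * g j) + (\<Sum>j<2 * r. \<Sum>k<j. f j * g k))"
proof -
  let ?N = "2 * r"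
  have a: "(\<Sum>j<?N. f j) = 2 * (\<Sum>j<r. f j)" by (rule refl_double) (rule sf)
  have b: "(\<Sum>j<?N. g j) = 2 * (\<Sum>j<r. g j)" by (rule refl_double) (rule sg)
  have c: "(\<Sum>j<?N. f j * g j) = 2 * (\<Sum>j<r. f j * g j)"
  proof (rule refl_double)
    fix j assume "j < 2 * r"
    thus "f (2 * r - 1 - j) * g (2 * r - 1 - j) = f j * g j" using sf[of j] sg[of j] by simp
  qed
  have d: "(\<Sum>j<?N. \<Sum>k<j. f j * g k) = (\<Sum>j<?N. \<Sum>k<j. f k * g j)"
  proof (rule S1_S2)
    fix j assume "j < 2 * r"
    thus "f (2 * r - 1 - j) = f j" by (rule sf)
  next
    fix j assume "j < 2 * r"
    thus "g (2 * r - 1 - j) = g j" by (rule sg)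
  qed
  have "2 * (\<Sum>j<r. f j) * (2 * (\<Sum>j<r. g j)) = 2 * (\<Sum>j<r. f j * g j) + 2 * (\<Sum>j<?N. \<Sum>k<j. f j * g k)"
    using prodsum[of f ?N g] a b c d by simp
  hence "(\<Sum>j<r. f j * g j) + (\<Sum>j<?N. \<Sum>k<j. f j * g k) = 2 * ((\<Sum>j<r. f j) * (\<Sum>j<r. g j))"
    by (simp add: algebra_simps)
  thus ?thesis by simp
qed


lemma par_total:
  fixes x y h g bx bw nf mf :: "nat \<Rightarrow> nat" and r d :: nat
  assumes bx0: "bx 0 = 0" and bxS: "\<And>j. bx (Suc j) = x j"
    and bw0: "bw 0 = 0" and bwS: "\<And>j. bw (Suc j) = y j"
    and xd: "x d = 0" and dr: "d = 2 * r - 1" and r1: "r \<ge> 1"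
    and nf: "\<And>j. j \<le> d \<Longrightarrow> nf j = bx j + h j + x j"
    and mf: "\<And>j. j \<le> d \<Longrightarrow> mf j = bw j + g j + y j"
    and snf: "\<And>j. j \<le> d \<Longrightarrow> nf (d - j) = nf j"
    and smf: "\<And>j. j \<le> d \<Longrightarrow> mf (d - j) = mf j"
  shows "even ((\<Sum>j<r. nf j * mf j) + (\<Sum>j\<le>d. x j * y j)
    + (\<Sum>j\<le>d. bw j * (h j + g j + x j + y j) + g j * (x j + y j + bw j) + y j * (bw j + g j))
    + (\<Sum>j\<le>d. \<Sum>k<j. h j * g k))"
proof -
  define S1 where "S1 = (\<Sum>j\<le>d. \<Sum>k<j. nf j * mf k)"
  define Hg where "Hg = (\<Sum>j\<le>d. \<Sum>k<j. h j * g k)"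
  define XY where "XY = (\<Sum>j\<le>d. x j * y j)"
  define Sb where "Sb = (\<Sum>j\<le>d. bw j * (h j + x j) + g j * x j)"
  define K where "K = (\<Sum>j\<le>d. bw j * g j + bw j * y j + g j * y j)"
  define R where "R = (\<Sum>j<r. nf j * mf j)"
  have A: "even (S1 + Hg + XY + Sb)"
  proof -
    have "even ((\<Sum>j\<le>d. \<Sum>k<j. (bx j + h j + x j) * (bw k + g k + y k)) + Hg + XY + Sb
       + x d * (\<Sum>k\<le>d. bw k + g k + y k))"
      unfolding Hg_def XY_def Sb_def by (rule par_a[OF bx0 bxS bw0 bwS])
    moreover have "(\<Sum>j\<le>d. \<Sum>k<j. (bx j + h j + x j) * (bw k + g k + y k)) = S1"
      unfolding S1_def by (intro sum.cong refl) (simp add: nf mf)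
    ultimately show ?thesis using xd by simp
  qed
  have N: "{..<2 * r} = {..d}" using dr r1 by auto
  have C: "even (R + S1)"
  proof -
    have "even ((\<Sum>j<r. nf j * mf j) + (\<Sum>j<2 * r. \<Sum>k<j. nf j * mf k))"
    proof (rule par_c)
      fix j assume "j < 2 * r" hence "j \<le> d" using dr r1 by simp
      thus "nf (2 * r - 1 - j) = nf j" using snf dr by simp
    next
      fix j assume "j < 2 * r" hence "j \<le> d" using dr r1 by simp
      thus "mf (2 * r - 1 - j) = mf j" using smf dr by simp
    qed
    thus ?thesis unfolding R_def S1_def N .
  qed
  have E: "(\<Sum>j\<le>d. bw j * (h j + g j + x j + y j) + g j * (x j + y j + bw j) + y j * (bw j + g j)) = Sb + 2 * K"
  proof -
    have "(\<Sum>j\<le>d. bw j * (h j + g j + x j + y j) + g j * (x j + y j + bw j) + y j * (bw j + g j))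
        = (\<Sum>j\<le>d. (bw j * (h j + x j) + g j * x j) + 2 * (bw j * g j + bw j * y j + g j * y j))"
      by (intro sum.cong refl) (simp add: algebra_simps)
    also have "\<dots> = Sb + 2 * K" unfolding Sb_def K_def by (simp only: sum.distrib sum_distrib_left[symmetric])
    finally show ?thesis .
  qed
  have eqn: "R + XY + (Sb + 2 * K) + Hg + 2 * S1 = (R + S1) + (S1 + Hg + XY + Sb) + 2 * K" by simp
  have ev: "even ((R + S1) + (S1 + Hg + XY + Sb) + 2 * K)" by (rule dvd_add[OF dvd_add[OF C A] dvd_triv_left])
  have "even (R + XY + (Sb + 2 * K) + Hg + 2 * S1)" unfolding eqn by (rule ev)
  hence "even (R + XY + (Sb + 2 * K) + Hg)" by (simp only: dvd_add_left_iff[OF dvd_triv_left])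
  thus ?thesis unfolding E[symmetric] R_def XY_def Hg_def .
qed

lemma half_sum_add:
  fixes F :: "nat \<Rightarrow> nat \<Rightarrow> nat" and p q :: "nat \<Rightarrow> nat"
  assumes add: "\<And>j u v. F j (u + v) = F j u + F j v + 2 * (u * v)"
    and ev: "\<And>j u. even (F j u)" and fin: "finite I"
  shows "(\<Sum>j\<in>I. F j (p j + q j)) div 2 = (\<Sum>j\<in>I. F j (p j)) div 2 + (\<Sum>j\<in>I. F j (q j)) div 2 + (\<Sum>j\<in>I. p j * q j)"
proof -
  have s: "(\<Sum>j\<in>I. F j (p j + q j)) = (\<Sum>j\<in>I. F j (p j)) + (\<Sum>j\<in>I. F j (q j)) + 2 * (\<Sum>j\<in>I. p j * q j)"
    by (simp add: add sum.distrib sum_distrib_left)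
  have e1: "even (\<Sum>j\<in>I. F j (p j))" by (rule dvd_sum) (use ev in auto)
  have e2: "even (\<Sum>j\<in>I. F j (q j))" by (rule dvd_sum) (use ev in auto)
  from e1 obtain A where A: "(\<Sum>j\<in>I. F j (p j)) = 2 * A" by (auto elim: evenE)
  from e2 obtain B where B: "(\<Sum>j\<in>I. F j (q j)) = 2 * B" by (auto elim: evenE)
  show ?thesis unfolding s A B by simp
qed

lemma sq_add1: "(u + v) * (u + v + 1) = u * (u + 1) + v * (v + 1) + 2 * (u * v :: nat)"
  by (simp add: algebra_simps)

lemma sq_add2: "(u + v) * (u + v - 1) = u * (u - 1) + v * (v - 1) + 2 * (u * v :: nat)"
  by (cases u; cases v) (simp_all add: algebra_simps)

lemma ev1: "even (u * (u + 1 :: nat))" by simp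
lemma ev2: "even (u * (u - 1 :: nat))" by (cases u) simp_all

lemma R_add: "R_exp (\<lambda>j. n j + m j) r = R_exp n r + R_exp m r + (\<Sum>j<r. n j * m j)"
proof -
  define F where "F j u = (if even (r + j) then u * (u + 1) else u * (u - 1))" for j u :: nat
  have "R_exp (\<lambda>j. n j + m j) r = (\<Sum>j<r. F j (n j + m j)) div 2" unfolding R_exp_def F_def ..
  also have "\<dots> = (\<Sum>j<r. F j (n j)) div 2 + (\<Sum>j<r. F j (m j)) div 2 + (\<Sum>j<r. n j * m j)"
  proof (rule half_sum_add)
    fix j u v show "F j (u + v) = F j u + F j v + 2 * (u * v)"
    proof (cases "even (r + j)")
      case True show ?thesis unfolding F_def if_P[OF True] by (rule sq_add1)
    next
      case False show ?thesis unfolding F_def if_not_P[OF False] by (rule sq_add2)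
    qed
  next
    fix j u show "even (F j u)" unfolding F_def using ev1 ev2 by simp
  qed simp
  also have "(\<Sum>j<r. F j (n j)) div 2 = R_exp n r" unfolding R_exp_def F_def ..
  also have "(\<Sum>j<r. F j (m j)) div 2 = R_exp m r" unfolding R_exp_def F_def ..
  finally show ?thesis .
qed

lemma N_add:
  assumes "\<And>j. j \<le> d \<Longrightarrow> length (A j) = length (a j) + length (b j)"
  shows "N_exp A d = N_exp a d + N_exp b d + (\<Sum>j\<le>d. length (a j) * length (b j))"
proof -
  define F where "F j u = (if even j then u * (u - 1) else u * (u + 1))" for j u :: nat
  have "N_exp A d = (\<Sum>j\<le>d. F j (length (a j) + length (b j))) div 2"
    unfolding N_exp_def F_def Let_def using assms by (intro arg_cong[where f = "\<lambda>x. x div 2"] sum.cong) auto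
  also have "\<dots> = (\<Sum>j\<le>d. F j (length (a j))) div 2 + (\<Sum>j\<le>d. F j (length (b j))) div 2 + (\<Sum>j\<le>d. length (a j) * length (b j))"
  proof (rule half_sum_add)
    fix j u v show "F j (u + v) = F j u + F j v + 2 * (u * v)"
    proof (cases "even j")
      case True show ?thesis unfolding F_def if_P[OF True] by (rule sq_add2)
    next
      case False show ?thesis unfolding F_def if_not_P[OF False] by (rule sq_add1)
    qed
  next
    fix j u show "even (F j u)" unfolding F_def using ev1 ev2 by simp
  qed simp
  also have "(\<Sum>j\<le>d. F j (length (a j))) div 2 = N_exp a d" unfolding N_exp_def F_def Let_def ..
  also have "(\<Sum>j\<le>d. F j (length (b j))) div 2 = N_exp b d" unfolding N_exp_def F_def Let_def ..
  finally show ?thesis .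
qed


lemma left_inv_le:
  fixes A B :: "'a::field mat"
  assumes A: "A \<in> carrier_mat p q" and B: "B \<in> carrier_mat q p" and BA: "B * A = 1\<^sub>m q"
  shows "q \<le> p"
proof (rule ccontr)
  assume "\<not> q \<le> p"
  then obtain v where v: "v \<in> carrier_vec q" "v \<noteq> 0\<^sub>v q" "A *\<^sub>v v = 0\<^sub>v p"
    using wide_kernel[OF A] by auto
  have "v = (B * A) *\<^sub>v v" using BA v(1) by simp
  also have "\<dots> = B *\<^sub>v (A *\<^sub>v v)" by (rule assoc_mult_mat_vec[OF B A v(1)])
  also have "\<dots> = 0\<^sub>v q" using v(3) B by (simp add: mat_vec_zero)
  finally show False using v(2) by simp
qed

lemma chir_dim:
  fixes G :: "nat \<Rightarrow> 'a::field mat"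
  assumes G: "is_chirality n G d" and j: "j \<le> d"
  shows "n (d - j) = n j"
proof -
  have k: "d - j \<le> d" by simp
  have dk: "d - (d - j) = j" using j by simp
  have c1: "G j \<in> carrier_mat (n (d - j)) (n j)" "G (d - j) * G j = 1\<^sub>m (n j)"
    using G j unfolding is_chirality_def by auto
  have c2: "G (d - j) \<in> carrier_mat (n j) (n (d - j))" "G j * G (d - j) = 1\<^sub>m (n (d - j))"
    using G k dk unfolding is_chirality_def by (metis (no_types, lifting))+
  show ?thesis using left_inv_le[OF c1(1) c2(1) c1(2)] left_inv_le[OF c2(1) c1(1) c2(2)] by simp
qed

lemma dsum_chirality:
  fixes G H :: "nat \<Rightarrow> 'a::field mat"
  assumes G: "is_chirality n G d" and H: "is_chirality m H d"
  shows "is_chirality (dsum_dim n m) (dsum_chir n m d G H) d"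
  unfolding is_chirality_def
proof (intro allI impI conjI)
  fix j assume j: "j \<le> d"
  have dk: "d - (d - j) = j" using j by simp
  have Gj: "G j \<in> carrier_mat (n (d - j)) (n j)" "G (d - j) * G j = 1\<^sub>m (n j)" using G j unfolding is_chirality_def by auto
  have Hj: "H j \<in> carrier_mat (m (d - j)) (m j)" "H (d - j) * H j = 1\<^sub>m (m j)" using H j unfolding is_chirality_def by auto
  have Gk: "G (d - j) \<in> carrier_mat (n j) (n (d - j))" using G dk unfolding is_chirality_def
    by (metis diff_le_self)
  have Hk: "H (d - j) \<in> carrier_mat (m j) (m (d - j))" using H dk unfolding is_chirality_def
    by (metis diff_le_self)
  show "dsum_chir n m d G H j \<in> carrier_mat (dsum_dim n m (d - j)) (dsum_dim n m j)"
    unfolding dsum_chir_def dsum_dim_def using Gj(1) Hj(1) by simp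
  have "dsum_chir n m d G H (d - j) * dsum_chir n m d G H j =
     four_block_mat (G (d - j)) (0\<^sub>m (n j) (m (d - j))) (0\<^sub>m (m j) (n (d - j))) (H (d - j)) *
     four_block_mat (G j) (0\<^sub>m (n (d - j)) (m j)) (0\<^sub>m (m (d - j)) (n j)) (H j)"
    unfolding dsum_chir_def dk ..
  also have "\<dots> = four_block_mat (G (d - j) * G j + 0\<^sub>m (n j) (m (d - j)) * 0\<^sub>m (m (d - j)) (n j))
      (G (d - j) * 0\<^sub>m (n (d - j)) (m j) + 0\<^sub>m (n j) (m (d - j)) * H j)
      (0\<^sub>m (m j) (n (d - j)) * G j + H (d - j) * 0\<^sub>m (m (d - j)) (n j))
      (0\<^sub>m (m j) (n (d - j)) * 0\<^sub>m (n (d - j)) (m j) + H (d - j) * H j)"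
    by (rule mult_four_block_mat[OF Gk _ _ Hk Gj(1) _ _ Hj(1)]) auto
  also have "\<dots> = four_block_mat (1\<^sub>m (n j)) (0\<^sub>m (n j) (m j)) (0\<^sub>m (m j) (n j)) (1\<^sub>m (m j))"
    using Gj Hj Gk Hk by (simp add: left_mult_zero_mat right_mult_zero_mat)
  also have "\<dots> = 1\<^sub>m (dsum_dim n m j)" unfolding dsum_dim_def by simp
  finally show "dsum_chir n m d G H (d - j) * dsum_chir n m d G H j = 1\<^sub>m (dsum_dim n m j)" .
qed

lemma dsum_complex:
  fixes D E :: "nat \<Rightarrow> 'a::field mat"
  assumes D: "is_complex n D d" and E: "is_complex m E d"
  shows "is_complex (dsum_dim n m) (dsum_diff n m D E) d"
  unfolding is_complex_def
proof (intro allI impI conjI)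
  fix j assume j: "j < d"
  have "D j \<in> carrier_mat (n (Suc j)) (n j)" "E j \<in> carrier_mat (m (Suc j)) (m j)"
    using D E j unfolding is_complex_def by auto
  thus "dsum_diff n m D E j \<in> carrier_mat (dsum_dim n m (Suc j)) (dsum_dim n m j)"
    unfolding dsum_diff_def dsum_dim_def by simp
next
  fix j assume j: "Suc j < d"
  have Dj: "D j \<in> carrier_mat (n (Suc j)) (n j)" "D (Suc j) \<in> carrier_mat (n (Suc (Suc j))) (n (Suc j))"
    "D (Suc j) * D j = 0\<^sub>m (n (Suc (Suc j))) (n j)" using D j unfolding is_complex_def by auto
  have Ej: "E j \<in> carrier_mat (m (Suc j)) (m j)" "E (Suc j) \<in> carrier_mat (m (Suc (Suc j))) (m (Suc j))"
    "E (Suc j) * E j = 0\<^sub>m (m (Suc (Suc j))) (m j)" using E j unfolding is_complex_def by auto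
  have "dsum_diff n m D E (Suc j) * dsum_diff n m D E j =
     four_block_mat (D (Suc j) * D j + 0\<^sub>m (n (Suc (Suc j))) (m (Suc j)) * 0\<^sub>m (m (Suc j)) (n j))
      (D (Suc j) * 0\<^sub>m (n (Suc j)) (m j) + 0\<^sub>m (n (Suc (Suc j))) (m (Suc j)) * E j)
      (0\<^sub>m (m (Suc (Suc j))) (n (Suc j)) * D j + E (Suc j) * 0\<^sub>m (m (Suc j)) (n j))
      (0\<^sub>m (m (Suc (Suc j))) (n (Suc j)) * 0\<^sub>m (n (Suc j)) (m j) + E (Suc j) * E j)"
    unfolding dsum_diff_def by (rule mult_four_block_mat[OF Dj(2) _ _ Ej(2) Dj(1) _ _ Ej(1)]) auto
  also have "\<dots> = four_block_mat (0\<^sub>m (n (Suc (Suc j))) (n j)) (0\<^sub>m (n (Suc (Suc j))) (m j))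
     (0\<^sub>m (m (Suc (Suc j))) (n j)) (0\<^sub>m (m (Suc (Suc j))) (m j))"
    using Dj Ej by (simp add: left_mult_zero_mat right_mult_zero_mat)
  also have "\<dots> = 0\<^sub>m (dsum_dim n m (Suc (Suc j))) (dsum_dim n m j)" unfolding dsum_dim_def by simp
  finally show "dsum_diff n m D E (Suc j) * dsum_diff n m D E j = 0\<^sub>m (dsum_dim n m (Suc (Suc j))) (dsum_dim n m j)" .
qed


lemma swap_cols:
  fixes X Y Z :: "'a::field vec list"
  assumes len: "length (X @ Y @ Z) = N"
  shows "det (mat_of_cols N (X @ Y @ Z)) = (-1) ^ (length Y * length Z) * det (mat_of_cols N (X @ Z @ Y))"
proof -
  let ?A = "mat_of_cols N (X @ Y @ Z)"
  let ?l = "length X" and ?k = "length Y" and ?n = "length Z"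
  have A: "?A \<in> carrier_mat N N" using len mat_of_cols_carrier(1)[of N "X @ Y @ Z"] by simp
  have N: "N = ?l + ?k + ?n" using len by simp
  have "det ?A = (-1) ^ (?k * ?n) * det (mat N N (\<lambda>(i, j). ?A $$ (i, if j < ?l then j else if j < ?l + ?n then j + ?k else j - ?n)))"
    by (rule det_swap_final_cols[OF A N])
  also have "mat N N (\<lambda>(i, j). ?A $$ (i, if j < ?l then j else if j < ?l + ?n then j + ?k else j - ?n)) = mat_of_cols N (X @ Z @ Y)"
  proof (rule eq_matI)
    fix i j assume i: "i < dim_row (mat_of_cols N (X @ Z @ Y))" and j: "j < dim_col (mat_of_cols N (X @ Z @ Y))"
    hence i': "i < N" and j': "j < ?l + ?k + ?n" by auto
    have idx: "(if j < ?l then j else if j < ?l + ?n then j + ?k else j - ?n) < N" using j' N by auto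
    have "mat N N (\<lambda>(i, j). ?A $$ (i, if j < ?l then j else if j < ?l + ?n then j + ?k else j - ?n)) $$ (i, j)
        = (X @ Y @ Z) ! (if j < ?l then j else if j < ?l + ?n then j + ?k else j - ?n) $ i"
      using i' j' N idx by (simp add: mat_of_cols_index)
    also have "\<dots> = (X @ Z @ Y) ! j $ i"
      using j' by (auto simp: nth_append add.commute[of "length Z"])
    also have "\<dots> = mat_of_cols N (X @ Z @ Y) $$ (i, j)" using i' j' by (simp add: mat_of_cols_index)
    finally show "mat N N (\<lambda>(i, j). ?A $$ (i, if j < ?l then j else if j < ?l + ?n then j + ?k else j - ?n)) $$ (i, j)
        = mat_of_cols N (X @ Z @ Y) $$ (i, j)" .
  qed (use N in auto)
  finally show ?thesis .
qed

definition inl :: "nat \<Rightarrow> 'a::zero vec \<Rightarrow> 'a vec" where "inl k x = x @\<^sub>v 0\<^sub>v k"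
definition inr :: "nat \<Rightarrow> 'a::zero vec \<Rightarrow> 'a vec" where "inr k y = 0\<^sub>v k @\<^sub>v y"

lemma inl_car: "x \<in> carrier_vec p \<Longrightarrow> inl q x \<in> carrier_vec (p + q)"
  unfolding inl_def by auto
lemma inr_car: "y \<in> carrier_vec q \<Longrightarrow> inr p y \<in> carrier_vec (p + q)"
  unfolding inr_def by auto

lemma zero_app_zero: "0\<^sub>v p @\<^sub>v 0\<^sub>v q = (0\<^sub>v (p + q) :: 'a::zero vec)"
  by (rule eq_vecI) auto

lemma block_det:
  fixes L1 L2 :: "'a::field vec list"
  assumes L1: "set L1 \<subseteq> carrier_vec p" "length L1 = p" and L2: "set L2 \<subseteq> carrier_vec q" "length L2 = q"
  shows "det (mat_of_cols (p + q) (map (inl q) L1 @ map (inr p) L2)) = det (mat_of_cols p L1) * det (mat_of_cols q L2)"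
proof -
  have "mat_of_cols (p + q) (map (inl q) L1 @ map (inr p) L2) =
    four_block_mat (mat_of_cols p L1) (0\<^sub>m p q) (0\<^sub>m q p) (mat_of_cols q L2)"
  proof (rule eq_matI)
    fix i j assume "i < dim_row (four_block_mat (mat_of_cols p L1) (0\<^sub>m p q) (0\<^sub>m q p) (mat_of_cols q L2))"
      "j < dim_col (four_block_mat (mat_of_cols p L1) (0\<^sub>m p q) (0\<^sub>m q p) (mat_of_cols q L2))"
    hence i: "i < p + q" and j: "j < p + q" using L1 L2 by auto
    show "mat_of_cols (p + q) (map (inl q) L1 @ map (inr p) L2) $$ (i, j) =
      four_block_mat (mat_of_cols p L1) (0\<^sub>m p q) (0\<^sub>m q p) (mat_of_cols q L2) $$ (i, j)"
    proof (cases "j < p")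
      case True
      have "L1 ! j \<in> carrier_vec p" using L1(1) nth_mem[of j L1] True L1(2) by auto
      hence dj: "dim_vec (L1 ! j) = p" by simp
      show ?thesis using i j True L1(2) L2(2) dj
        by (auto simp: mat_of_cols_index nth_append inl_def)
    next
      case False
      have "L2 ! (j - p) \<in> carrier_vec q" using L2(1) nth_mem[of "j - p" L2] False j L2(2) by auto
      hence dj: "dim_vec (L2 ! (j - p)) = q" by simp
      show ?thesis using i j False L1(2) L2(2) dj
        by (auto simp: mat_of_cols_index nth_append inr_def)
    qed
  qed (use L1 L2 in auto)
  also have "det \<dots> = det (mat_of_cols p L1) * det (mat_of_cols q L2)"
    by (rule det_four_block_mat_lower_left_zero) (use L1 L2 in auto)
  finally show ?thesis .
qed

lemma alt_pow_sign: "alt_pow j ((-1) ^ e) = ((-1) ^ e :: 'a::field)"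
  unfolding alt_pow_def by (cases "even e") auto

lemma sign_eq: "even (a + b) \<Longrightarrow> ((-1) ^ a :: 'a::ring_1) = (-1) ^ b"
  by (cases "even a") auto


locale dsm = C1: dat n D d a eta + C2: dat m E d a2 eta2
  for n :: "nat \<Rightarrow> nat" and D :: "nat \<Rightarrow> 'a::field mat" and d :: nat and a eta
    and m :: "nat \<Rightarrow> nat" and E :: "nat \<Rightarrow> 'a mat" and a2 eta2
begin

definition SA :: "nat \<Rightarrow> 'a vec list" where
  "SA j = map (inl (m j)) (a j) @ map (inr (n j)) (a2 j)"
definition SE :: "nat \<Rightarrow> 'a vec list" where
  "SE j = map (inl (m j)) (eta j) @ map (inr (n j)) (eta2 j)"

abbreviation "nn \<equiv> dsum_dim n m"
abbreviation "DD \<equiv> dsum_diff n m D E"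

lemma DD_inl: assumes i: "i < d" and x: "x \<in> carrier_vec (n i)"
  shows "DD i *\<^sub>v inl (m i) x = inl (m (Suc i)) (D i *\<^sub>v x)"
proof -
  have Di: "D i \<in> carrier_mat (n (Suc i)) (n i)" by (rule C1.Dcar[OF i])
  have Ei: "E i \<in> carrier_mat (m (Suc i)) (m i)" by (rule C2.Dcar[OF i])
  have "DD i *\<^sub>v inl (m i) x = (D i *\<^sub>v x + 0\<^sub>m (n (Suc i)) (m i) *\<^sub>v 0\<^sub>v (m i)) @\<^sub>v (0\<^sub>m (m (Suc i)) (n i) *\<^sub>v x + E i *\<^sub>v 0\<^sub>v (m i))"
    unfolding dsum_diff_def inl_def by (rule four_block_mat_mult_vec[OF Di _ _ Ei x]) auto
  also have "\<dots> = inl (m (Suc i)) (D i *\<^sub>v x)"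
    using Di Ei x by (simp add: inl_def zero_mat_vec mat_vec_zero)
  finally show ?thesis .
qed

lemma DD_inr: assumes i: "i < d" and y: "y \<in> carrier_vec (m i)"
  shows "DD i *\<^sub>v inr (n i) y = inr (n (Suc i)) (E i *\<^sub>v y)"
proof -
  have Di: "D i \<in> carrier_mat (n (Suc i)) (n i)" by (rule C1.Dcar[OF i])
  have Ei: "E i \<in> carrier_mat (m (Suc i)) (m i)" by (rule C2.Dcar[OF i])
  have "DD i *\<^sub>v inr (n i) y = (D i *\<^sub>v 0\<^sub>v (n i) + 0\<^sub>m (n (Suc i)) (m i) *\<^sub>v y) @\<^sub>v (0\<^sub>m (m (Suc i)) (n i) *\<^sub>v 0\<^sub>v (n i) + E i *\<^sub>v y)"
    unfolding dsum_diff_def inr_def by (rule four_block_mat_mult_vec[OF Di _ _ Ei _ y]) auto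
  also have "\<dots> = inr (n (Suc i)) (E i *\<^sub>v y)"
    using Di Ei y by (simp add: inr_def zero_mat_vec mat_vec_zero)
  finally show ?thesis .
qed

lemma dprev_S: assumes j: "j \<le> d"
  shows "dprev DD SA j = map (inl (m j)) (C1.b j) @ map (inr (n j)) (C2.b j)"
proof (cases j)
  case 0 thus ?thesis by (simp add: dprev_def)
next
  case (Suc i)
  hence i: "i < d" using j by simp
  have "map (\<lambda>v. DD i *\<^sub>v v) (map (inl (m i)) (a i)) = map (inl (m (Suc i))) (map (\<lambda>v. D i *\<^sub>v v) (a i))"
    using DD_inl[OF i] C1.a_car[of i] i by auto
  moreover have "map (\<lambda>v. DD i *\<^sub>v v) (map (inr (n i)) (a2 i)) = map (inr (n (Suc i))) (map (\<lambda>v. E i *\<^sub>v v) (a2 i))"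
    using DD_inr[OF i] C2.a_car[of i] i by auto
  ultimately show ?thesis using Suc by (simp add: dprev_def SA_def)
qed

lemma SE_cocyc: assumes j: "j \<le> d" shows "set (SE j) \<subseteq> cocyc nn DD d j"
proof
  fix v assume "v \<in> set (SE j)"
  then consider (l) x where "x \<in> set (eta j)" "v = inl (m j) x" | (r) y where "y \<in> set (eta2 j)" "v = inr (n j) y"
    unfolding SE_def by auto
  thus "v \<in> cocyc nn DD d j"
  proof cases
    case l
    have x: "x \<in> cocyc n D d j" using l C1.eta_cocyc[OF j] by auto
    have xc: "x \<in> carrier_vec (n j)" using x C1.cocyc_carrier by auto
    have "DD j *\<^sub>v v = 0\<^sub>v (nn (Suc j))" if jd: "j < d"
    proof -
      have "DD j *\<^sub>v v = inl (m (Suc j)) (D j *\<^sub>v x)" using l DD_inl[OF jd xc] by simp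
      also have "D j *\<^sub>v x = 0\<^sub>v (n (Suc j))" using x jd unfolding C1.cocyc_iff by simp
      finally show ?thesis by (simp add: inl_def zero_app_zero dsum_dim_def)
    qed
    moreover have "v \<in> carrier_vec (nn j)" using l inl_car[OF xc] by (simp add: dsum_dim_def)
    ultimately show ?thesis unfolding cocyc_def by auto
  next
    case r
    have y: "y \<in> cocyc m E d j" using r C2.eta_cocyc[OF j] by auto
    have yc: "y \<in> carrier_vec (m j)" using y C2.cocyc_carrier by auto
    have "DD j *\<^sub>v v = 0\<^sub>v (nn (Suc j))" if jd: "j < d"
    proof -
      have "DD j *\<^sub>v v = inr (n (Suc j)) (E j *\<^sub>v y)" using r DD_inr[OF jd yc] by simp
      also have "E j *\<^sub>v y = 0\<^sub>v (m (Suc j))" using y jd unfolding C2.cocyc_iff by simp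
      finally show ?thesis by (simp add: inr_def zero_app_zero dsum_dim_def)
    qed
    moreover have "v \<in> carrier_vec (nn j)" using r inr_car[OF yc] by (simp add: dsum_dim_def)
    ultimately show ?thesis unfolding cocyc_def by auto
  qed
qed

definition e :: "nat \<Rightarrow> nat" where
  "e j = length (C2.b j) * (length (eta j) + length (eta2 j) + length (a j) + length (a2 j))
     + length (eta2 j) * (length (a j) + length (a2 j) + length (C2.b j))
     + length (a2 j) * (length (C2.b j) + length (eta2 j))"

lemma det_S: assumes j: "j \<le> d"
  shows "det (phi_mat nn DD SA SE j) = (-1) ^ e j * det (C1.P j) * det (C2.P j)"
proof -
  define B1 where "B1 = map (inl (m j)) (C1.b j)"
  define B2 where "B2 = map (inr (n j)) (C2.b j)"
  define H1 where "H1 = map (inl (m j)) (eta j)"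
  define H2 where "H2 = map (inr (n j)) (eta2 j)"
  define A1 where "A1 = map (inl (m j)) (a j)"
  define A2 where "A2 = map (inr (n j)) (a2 j)"
  define N where "N = n j + m j"
  have lens: "length B1 = length (C1.b j)" "length B2 = length (C2.b j)" "length H1 = length (eta j)"
    "length H2 = length (eta2 j)" "length A1 = length (a j)" "length A2 = length (a2 j)"
    unfolding B1_def B2_def H1_def H2_def A1_def A2_def by simp_all
  have tot: "length B1 + length B2 + length H1 + length H2 + length A1 + length A2 = N"
    unfolding lens N_def using C1.len[OF j] C2.len[OF j] by simp
  have "phi_mat nn DD SA SE j = mat_of_cols N (B1 @ B2 @ H1 @ H2 @ A1 @ A2)"
    unfolding phi_mat_def dprev_S[OF j] SE_def SA_def B1_def B2_def H1_def H2_def A1_def A2_def N_def dsum_dim_def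
    by simp
  also have "det \<dots> = (-1) ^ (length B2 * (length H1 + length H2 + length A1 + length A2)) * det (mat_of_cols N (B1 @ H1 @ H2 @ A1 @ A2 @ B2))"
  proof -
    have l0: "length (B1 @ B2 @ (H1 @ H2 @ A1 @ A2)) = N" using tot by (simp add: add.assoc)
    show ?thesis using swap_cols[OF l0] by (simp only: append_assoc length_append add.assoc)
  qed
  also have "det (mat_of_cols N (B1 @ H1 @ H2 @ A1 @ A2 @ B2)) = (-1) ^ (length H2 * (length A1 + length A2 + length B2)) * det (mat_of_cols N (B1 @ H1 @ A1 @ A2 @ B2 @ H2))"
  proof -
    have l0: "length ((B1 @ H1) @ H2 @ (A1 @ A2 @ B2)) = N" using tot by simp
    show ?thesis using swap_cols[OF l0] by (simp only: append_assoc length_append add.assoc)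
  qed
  also have "det (mat_of_cols N (B1 @ H1 @ A1 @ A2 @ B2 @ H2)) = (-1) ^ (length A2 * (length B2 + length H2)) * det (mat_of_cols N (B1 @ H1 @ A1 @ B2 @ H2 @ A2))"
  proof -
    have l0: "length ((B1 @ H1 @ A1) @ A2 @ (B2 @ H2)) = N" using tot by simp
    show ?thesis using swap_cols[OF l0] by (simp only: append_assoc length_append add.assoc)
  qed
  also have "B1 @ H1 @ A1 @ B2 @ H2 @ A2 = map (inl (m j)) (C1.b j @ eta j @ a j) @ map (inr (n j)) (C2.b j @ eta2 j @ a2 j)"
    unfolding B1_def B2_def H1_def H2_def A1_def A2_def by simp
  also have "det (mat_of_cols N (map (inl (m j)) (C1.b j @ eta j @ a j) @ map (inr (n j)) (C2.b j @ eta2 j @ a2 j)))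
     = det (C1.P j) * det (C2.P j)"
    unfolding N_def C1.P_def C2.P_def by (rule block_det[OF C1.all_car[OF j] C1.all_len[OF j] C2.all_car[OF j] C2.all_len[OF j]])
  finally show ?thesis unfolding e_def lens by (simp add: power_add)
qed

lemma datum_S: "phi_datum nn DD d (SA, SE)"
  unfolding phi_datum_def fst_conv snd_conv
proof (intro conjI allI impI)
  fix j assume j: "j \<le> d"
  show "set (SA j) \<subseteq> carrier_vec (nn j)"
  proof
    fix v assume "v \<in> set (SA j)"
    then consider (l) x where "x \<in> set (a j)" "v = inl (m j) x" | (r) y where "y \<in> set (a2 j)" "v = inr (n j) y"
      unfolding SA_def by auto
    thus "v \<in> carrier_vec (nn j)"
    proof cases
      case l thus ?thesis using C1.a_car[OF j] inl_car[of x "n j" "m j"] by (auto simp: dsum_dim_def)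
    next
      case r thus ?thesis using C2.a_car[OF j] inr_car[of y "m j" "n j"] by (auto simp: dsum_dim_def)
    qed
  qed
  show "set (SE j) \<subseteq> cocyc nn DD d j" by (rule SE_cocyc[OF j])
  show "length (dprev DD SA j) + length (SE j) + length (SA j) = nn j"
    unfolding dprev_S[OF j] SE_def SA_def dsum_dim_def using C1.len[OF j] C2.len[OF j] by simp
  have "det (C1.P j) \<noteq> 0" "det (C2.P j) \<noteq> 0" using C1.det_nz[OF j] C2.det_nz[OF j] unfolding C1.P_def C2.P_def by auto
  thus "det (phi_mat nn DD SA SE j) \<noteq> 0" unfolding det_S[OF j] by simp
next
  show "SA d = []" unfolding SA_def using C1.a_d C2.a_d by simp
qed

end


lemma alt_pow_sum_split:
  fixes c1 c2 p1 p2 :: "'a::field"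
  shows "alt_pow j (c1 * c2 / ((-1) ^ k * p1 * p2)) = (-1) ^ k * alt_pow j (c1 / p1) * alt_pow j (c2 / p2)"
proof -
  have s: "inverse ((-1) ^ k :: 'a) = (-1) ^ k" by (cases "even k") auto
  have eq: "c1 * c2 / ((-1) ^ k * p1 * p2) = (-1) ^ k * (c1 / p1) * (c2 / p2)"
    by (simp add: divide_inverse inverse_mult_distrib s)
  show ?thesis unfolding eq alt_pow_mult alt_pow_sign ..
qed

context dsm
begin

lemma c_mat_S:
  fixes G H :: "nat \<Rightarrow> 'a mat"
  assumes G: "is_chirality n G d" and H: "is_chirality m H d" and dr: "d = 2 * r - 1" and k: "k \<le> d"
  shows "det (c_mat nn (dsum_chir n m d G H) r k) = det (c_mat n G r k) * det (c_mat m H r k)"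
proof (cases "k < r")
  case True thus ?thesis unfolding c_mat_def by simp
next
  case False
  let ?i = "d - k"
  have i: "2 * r - 1 - k = ?i" using dr by simp
  have dk: "d - ?i = k" using k by simp
  have Gi: "G ?i \<in> carrier_mat (n k) (n k)"
    using G k dk chir_dim[OF G, of k] unfolding is_chirality_def by (metis diff_le_self)
  have Hi: "H ?i \<in> carrier_mat (m k) (m k)"
    using H k dk chir_dim[OF H, of k] unfolding is_chirality_def by (metis diff_le_self)
  have "c_mat nn (dsum_chir n m d G H) r k = four_block_mat (G ?i) (0\<^sub>m (n k) (m k)) (0\<^sub>m (m k) (n k)) (H ?i)"
    unfolding c_mat_def dsum_chir_def using False i dk chir_dim[OF G, of k] chir_dim[OF H, of k] k by simp
  also have "det \<dots> = det (G ?i) * det (H ?i)"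
    by (rule det_four_block_mat_lower_left_zero[OF Gi _ _ Hi]) auto
  finally show ?thesis unfolding c_mat_def using False i by simp
qed

lemma fst_S:
  fixes G H :: "nat \<Rightarrow> 'a mat"
  assumes G: "is_chirality n G d" and H: "is_chirality m H d" and dr: "d = 2 * r - 1" and r1: "r \<ge> 1"
  shows "fst (rho_rep nn DD (dsum_chir n m d G H) r (SA, SE)) =
    fst (mu_H n m d (rho_rep n D G r (a, eta)) (rho_rep m E H r (a2, eta2)))"
proof -
  let ?c1 = "\<lambda>j. det (c_mat n G r j)" and ?c2 = "\<lambda>j. det (c_mat m H r j)"
  let ?p1 = "\<lambda>j. det (phi_mat n D a eta j)" and ?p2 = "\<lambda>j. det (phi_mat m E a2 eta2 j)"
  let ?Pi1 = "\<Prod>j\<le>d. alt_pow j (?c1 j / ?p1 j)" and ?Pi2 = "\<Prod>j\<le>d. alt_pow j (?c2 j / ?p2 j)"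
  define R' where "R' = (\<Sum>j<r. n j * m j)"
  define XY where "XY = (\<Sum>j\<le>d. length (a j) * length (a2 j))"
  define Se where "Se = (\<Sum>j\<le>d. e j)"
  define S where "S = (\<Sum>j\<le>d. \<Sum>k<j. length (eta j) * length (eta2 k))"
  have prodS: "(\<Prod>j\<le>d. alt_pow j (det (c_mat nn (dsum_chir n m d G H) r j) / det (phi_mat nn DD SA SE j)))
      = (-1) ^ Se * ?Pi1 * ?Pi2"
  proof -
    have "(\<Prod>j\<le>d. alt_pow j (det (c_mat nn (dsum_chir n m d G H) r j) / det (phi_mat nn DD SA SE j)))
        = (\<Prod>j\<le>d. (-1) ^ e j * alt_pow j (?c1 j / ?p1 j) * alt_pow j (?c2 j / ?p2 j))"
    proof (rule prod.cong[OF refl])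
      fix j assume "j \<in> {..d}" hence j: "j \<le> d" by simp
      have "det (phi_mat nn DD SA SE j) = (-1) ^ e j * ?p1 j * ?p2 j"
        using det_S[OF j] by (simp add: C1.P_phi C2.P_phi)
      thus "alt_pow j (det (c_mat nn (dsum_chir n m d G H) r j) / det (phi_mat nn DD SA SE j))
          = (-1) ^ e j * alt_pow j (?c1 j / ?p1 j) * alt_pow j (?c2 j / ?p2 j)"
        using c_mat_S[OF G H dr j] alt_pow_sum_split by simp
    qed
    also have "\<dots> = (\<Prod>j\<le>d. (-1) ^ e j) * ?Pi1 * ?Pi2" by (simp add: prod.distrib)
    also have "(\<Prod>j\<le>d. (-1) ^ e j) = ((-1) ^ Se :: 'a)" unfolding Se_def by (rule power_sum[symmetric])
    finally show ?thesis .
  qed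
  have RS: "R_exp nn r = R_exp n r + R_exp m r + R'" unfolding R'_def dsum_dim_def by (rule R_add)
  have NS: "N_exp SA d = N_exp a d + N_exp a2 d + XY"
    unfolding XY_def by (rule N_add) (simp add: SA_def)
  have par: "even ((\<Sum>j<r. n j * m j) + (\<Sum>j\<le>d. length (a j) * length (a2 j))
    + (\<Sum>j\<le>d. length (C2.b j) * (length (eta j) + length (eta2 j) + length (a j) + length (a2 j))
        + length (eta2 j) * (length (a j) + length (a2 j) + length (C2.b j)) + length (a2 j) * (length (C2.b j) + length (eta2 j)))
    + (\<Sum>j\<le>d. \<Sum>k<j. length (eta j) * length (eta2 k)))"
  proof (rule par_total[where bx = "\<lambda>j. length (C1.b j)" and x = "\<lambda>j. length (a j)" and h = "\<lambda>j. length (eta j)"])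
    show "length (C1.b 0) = 0" "length (C2.b 0) = 0" by (simp_all add: dprev_def)
    show "\<And>j. length (C1.b (Suc j)) = length (a j)" "\<And>j. length (C2.b (Suc j)) = length (a2 j)" by (simp_all add: dprev_def)
    show "length (a d) = 0" using C1.a_d by simp
    show "d = 2 * r - 1" "1 \<le> r" using dr r1 by simp_all
    show "\<And>j. j \<le> d \<Longrightarrow> n j = length (C1.b j) + length (eta j) + length (a j)" using C1.len by simp
    show "\<And>j. j \<le> d \<Longrightarrow> m j = length (C2.b j) + length (eta2 j) + length (a2 j)" using C2.len by simp
    show "\<And>j. j \<le> d \<Longrightarrow> n (d - j) = n j" by (rule chir_dim[OF G])
    show "\<And>j. j \<le> d \<Longrightarrow> m (d - j) = m j" by (rule chir_dim[OF H])
  qed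
  hence par': "even ((R' + XY + Se) + S)" unfolding R'_def XY_def Se_def S_def e_def by (simp add: add.assoc)
  have sg: "((-1) ^ (R' + XY + Se) :: 'a) = (-1) ^ S" by (rule sign_eq[OF par'])
  have "fst (rho_rep nn DD (dsum_chir n m d G H) r (SA, SE)) =
      (-1) ^ (R_exp nn r + N_exp SA d) * ((-1) ^ Se * ?Pi1 * ?Pi2)"
    unfolding rho_rep_def Let_def dr[symmetric] fst_conv snd_conv prodS ..
  also have "\<dots> = (-1) ^ (R' + XY + Se) * ((-1) ^ (R_exp n r + N_exp a d) * ?Pi1) * ((-1) ^ (R_exp m r + N_exp a2 d) * ?Pi2)"
    unfolding RS NS by (simp add: power_add algebra_simps)
  also have "\<dots> = (-1) ^ S * ((-1) ^ (R_exp n r + N_exp a d) * ?Pi1) * ((-1) ^ (R_exp m r + N_exp a2 d) * ?Pi2)"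
    unfolding sg ..
  also have "\<dots> = fst (mu_H n m d (rho_rep n D G r (a, eta)) (rho_rep m E H r (a2, eta2)))"
    unfolding mu_H_def rho_rep_def Let_def dr[symmetric] fst_conv snd_conv S_def ..
  finally show ?thesis .
qed

lemma snd_S:
  "snd (rho_rep nn DD Gam r (SA, SE)) = snd (mu_H n m d (rho_rep n D G r (a, eta)) (rho_rep m E H r (a2, eta2)))"
  unfolding rho_rep_def mu_H_def Let_def SE_def inl_def inr_def by simp

end


theorem lemma4p4:
  fixes n m :: "nat \<Rightarrow> nat" and D E G H :: "nat \<Rightarrow> 'a::field_char_0 mat" and r :: nat
  assumes "r \<ge> 1"
    and "is_complex n D (2 * r - 1)" and "is_complex m E (2 * r - 1)"
    and "is_chirality n G (2 * r - 1)" and "is_chirality m H (2 * r - 1)"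
  shows "is_chirality (dsum_dim n m) (dsum_chir n m (2 * r - 1) G H) (2 * r - 1) \<and>
         detH_eq (dsum_dim n m) (dsum_diff n m D E) (2 * r - 1)
           (rho (dsum_dim n m) (dsum_diff n m D E) (dsum_chir n m (2 * r - 1) G H) r)
           (mu_H n m (2 * r - 1) (rho n D G r) (rho m E H r))"
proof -
  define d where "d = 2 * r - 1"
  have r1: "r \<ge> 1" using assms(1) .
  have cD: "is_complex n D d" and cE: "is_complex m E d" using assms(2,3) unfolding d_def .
  have gG: "is_chirality n G d" and gH: "is_chirality m H d" using assms(4,5) unfolding d_def .
  have cx1: "cx n D d" by (rule cx.intro[OF cD])
  have cx2: "cx m E d" by (rule cx.intro[OF cE])
  define ae1 where "ae1 = (SOME ae. phi_datum n D d ae)"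
  define ae2 where "ae2 = (SOME ae. phi_datum m E d ae)"
  have pd1: "phi_datum n D d ae1" unfolding ae1_def by (rule someI_ex[OF cx.exists_datum[OF cx1]])
  have pd2: "phi_datum m E d ae2" unfolding ae2_def by (rule someI_ex[OF cx.exists_datum[OF cx2]])
  have dat1: "dat n D d (fst ae1) (snd ae1)"
    by (rule dat.intro[OF cx1]) (rule dat_axioms.intro, simp add: pd1)
  have dat2': "dat m E d (fst ae2) (snd ae2)"
    by (rule dat.intro[OF cx2]) (rule dat_axioms.intro, simp add: pd2)
  interpret S: dsm n D d "fst ae1" "snd ae1" m E "fst ae2" "snd ae2"
    unfolding dsm_def using dat1 dat2' by simp
  let ?nn = "dsum_dim n m" and ?DD = "dsum_diff n m D E" and ?Gam = "dsum_chir n m d G H"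
  have cxS: "cx ?nn ?DD d" by (rule cx.intro[OF dsum_complex[OF cD cE]])
  define ae3 where "ae3 = (SOME ae. phi_datum ?nn ?DD d ae)"
  have pd3: "phi_datum ?nn ?DD d ae3" unfolding ae3_def by (rule someI[of _ "(S.SA, S.SE)"]) (rule S.datum_S)
  have dat3: "dat ?nn ?DD d (fst ae3) (snd ae3)"
    by (rule dat.intro[OF cxS]) (rule dat_axioms.intro, simp add: pd3)
  have datS: "dat ?nn ?DD d S.SA S.SE"
    by (rule dat.intro[OF cxS]) (rule dat_axioms.intro, rule S.datum_S)
  interpret T: dat2 ?nn ?DD d "fst ae3" "snd ae3" S.SA S.SE
    unfolding dat2_def using dat3 datS by simp
  have cmp: "detH_eq ?nn ?DD d (rho_rep ?nn ?DD ?Gam r (fst ae3, snd ae3)) (rho_rep ?nn ?DD ?Gam r (S.SA, S.SE))"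
    by (rule T.compare[OF d_def])
  have rho3: "rho ?nn ?DD ?Gam r = rho_rep ?nn ?DD ?Gam r (fst ae3, snd ae3)"
    unfolding rho_def ae3_def d_def by simp
  have rho1: "rho n D G r = rho_rep n D G r (fst ae1, snd ae1)"
    unfolding rho_def ae1_def d_def by simp
  have rho2: "rho m E H r = rho_rep m E H r (fst ae2, snd ae2)"
    unfolding rho_def ae2_def d_def by simp
  have eqS: "rho_rep ?nn ?DD ?Gam r (S.SA, S.SE) = mu_H n m d (rho n D G r) (rho m E H r)"
    unfolding rho1 rho2
    by (rule prod_eqI) (rule S.fst_S[OF gG gH d_def r1], rule S.snd_S)
  have "is_chirality ?nn ?Gam d" by (rule dsum_chirality[OF gG gH])
  moreover have "detH_eq ?nn ?DD d (rho ?nn ?DD ?Gam r) (mu_H n m d (rho n D G r) (rho m E H r))"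
    using cmp unfolding rho3 eqS .
  ultimately show ?thesis unfolding d_def by simp
qed


end
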